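(* Let $R_s>0$, $\lambda=2^{R_s}$, and let $\gamma_d,\gamma_e$ be independent, with $\gamma_t$ ($t\in\{d,e\}$) generalized-$K$ distributed with parameters $m_t>0,k_t>0$ and mean $\overline\gamma_t>0$, i.e. with CDF $F_{\gamma_t}(x)=\frac{1}{\Gamma(k_t)\Gamma(m_t)}G_{1,3}^{2,1}\!\left(\frac{k_tm_tx}{\overline\gamma_t}\,\middle|\,{1\atop k_t,m_t,0}\right)$. Assume $k_d=m_d$ and $m_d\neq1$. Let $\sigma_e^2$ be the variance of $\gamma_e$, $P(x)=F_{\gamma_d}(\lambda-1+\lambda x)$, $\widetilde P_{\rm sop}(\overline\gamma_d):=P(\overline\gamma_e)+\frac{\sigma_e^2}{2}P''(\overline\gamma_e)$, and write $a=\lambda-1+\lambda\overline\gamma_e$ and $c_e=\frac{(k_e+1)(m_e+1)}{k_em_e}-1$. Then, with all parameters except $\overline\gamma_d$ fixed, as $\overline\gamma_d\to\infty$, $$\widetilde P_{\rm sop}(\overline\gamma_d)=\overline\gamma_d^{-m_d}\left(\frac{\psi(m_d+1)+2\psi(1)-\psi(m_d)-\ln\frac{m_d^2a}{\overline\gamma_d}}{m_d^{-2m_d+1}\Gamma^2(m_d)a^{-m_d}}+\frac{c_e\left(\psi(m_d-1)+2\psi(1)-\psi(m_d)-\ln\frac{m_d^2a}{\overline\gamma_d}\right)}{2m_d^{-2m_d}\lambda^{-2}\overline\gamma_e^{-2}\Gamma(m_d)\Gamma(m_d-1)a^{2-m_d}}\right)+o(\overline\gamma_d^{-m_d}).$$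
   Context: $\psi$ is the digamma function, $\Gamma$ the Gamma function, and $G^{m,n}_{p,q}$ the standard Meijer G-function. The generalized-$K$ distribution with parameters $k,m$ and mean $\overline\gamma$ is that of $\overline\gamma XY$ with $X,Y$ independent unit-mean Gamma variables of shapes $k$ and $m$. $\widetilde P_{\rm sop}$ is the second-order Taylor approximation of the secrecy outage probability $\mathbb{E}\{F_{\gamma_d}(\lambda-1+\lambda\gamma_e)\}$ around the mean of $\gamma_e$. *)

theory Defs
  imports "HOL-Analysis.Analysis" "HOL-Library.Landau_Symbols"
begin

definition gamma_dens :: "real \<Rightarrow> real \<Rightarrow> real" where
  "gamma_dens k t = (if t > 0 then k powr k * t powr (k - 1) * exp (- k * t) / Gamma k else 0)"

text \<open>CDF of the generalized-K distribution with parameters k, m and mean g: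
  the law of g X Y, X ~ Gamma(k) and Y ~ Gamma(m) independent and unit-mean.
  (This equals the Meijer-G expression of the paper.)\<close>
definition genK_cdf :: "real \<Rightarrow> real \<Rightarrow> real \<Rightarrow> real \<Rightarrow> real" where
  "genK_cdf k m g x =
     (LINT s|lborel. LINT t|lborel.
        indicator {..x} (g * s * t) * gamma_dens k s * gamma_dens m t)"

definition genK_var :: "real \<Rightarrow> real \<Rightarrow> real \<Rightarrow> real" where
  "genK_var k m g =
     (LINT s|lborel. LINT t|lborel.
        (g * s * t - g)\<^sup>2 * gamma_dens k s * gamma_dens m t)"

definition sop_approx ::
  "real \<Rightarrow> real \<Rightarrow> real \<Rightarrow> real \<Rightarrow> real \<Rightarrow> real \<Rightarrow> real \<Rightarrow> real" where
  "sop_approx lam kd md gd ke me ge =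
     (let P = (\<lambda>x. genK_cdf kd md gd (lam - 1 + lam * x))
      in P ge + genK_var ke me ge / 2 * deriv (deriv P) ge)"

end

theory Submission
  imports Defs "HOL-Real_Asymp.Real_Asymp"
begin
lemma dct_within:
  fixes phi :: "real \<Rightarrow> real \<Rightarrow> real" and B psi :: "real \<Rightarrow> real"
  assumes bnd: "\<forall>\<^sub>F y in at x within S. (\<forall>s. \<bar>phi y s\<bar> \<le> B s) \<and> phi y \<in> borel_measurable lborel"
    and intB: "integrable lborel B"
    and lim: "\<And>s. ((\<lambda>y. phi y s) \<longlongrightarrow> psi s) (at x within S)"
    and meas: "psi \<in> borel_measurable lborel"
  shows "((\<lambda>y. LINT s|lborel. phi y s) \<longlongrightarrow> (LINT s|lborel. psi s)) (at x within S)"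
  unfolding tendsto_at_iff_sequentially
proof (intro allI impI)
  fix X :: "nat \<Rightarrow> real"
  assume X: "\<forall>i. X i \<in> S - {x}" "X \<longlonglongrightarrow> x"
  have fl: "filterlim X (at x within S) sequentially"
    using X by (auto simp: filterlim_at eventually_sequentially)
  from eventually_compose_filterlim[OF bnd fl]
  obtain N where N: "\<And>n. n \<ge> N \<Longrightarrow> (\<forall>s. \<bar>phi (X n) s\<bar> \<le> B s) \<and> phi (X n) \<in> borel_measurable lborel"
    by (auto simp: eventually_sequentially)
  have "(\<lambda>n. LINT s|lborel. phi (X (n + N)) s) \<longlonglongrightarrow> (LINT s|lborel. psi s)"
  proof (rule integral_dominated_convergence[where w=B])
    show "psi \<in> borel_measurable lborel" by fact
    show "phi (X (n + N)) \<in> borel_measurable lborel" for n using N[of "n+N"] by simp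
    show "integrable lborel B" by fact
    show "AE s in lborel. (\<lambda>n. phi (X (n + N)) s) \<longlonglongrightarrow> psi s"
    proof (rule AE_I2)
      fix s
      have "(\<lambda>n. phi (X n) s) \<longlonglongrightarrow> psi s"
        using filterlim_compose[OF lim fl] by simp
      then show "(\<lambda>n. phi (X (n + N)) s) \<longlonglongrightarrow> psi s"
        by (rule LIMSEQ_ignore_initial_segment)
    qed
    show "AE s in lborel. norm (phi (X (n + N)) s) \<le> B s" for n
      using N[of "n+N"] by auto
  qed
  then show "((\<lambda>y. LINT s|lborel. phi y s) \<circ> X) \<longlonglongrightarrow> (LINT s|lborel. psi s)"
    unfolding o_def by (rule LIMSEQ_offset)
qed

lemma leibniz_lint:
  fixes phi phi' :: "real \<Rightarrow> real \<Rightarrow> real" and B :: "real \<Rightarrow> real"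
  assumes x0: "a < x0" "x0 < b"
    and int: "\<And>x. x \<in> {a<..<b} \<Longrightarrow> integrable lborel (phi x)"
    and der: "\<And>x s. x \<in> {a<..<b} \<Longrightarrow> ((\<lambda>x. phi x s) has_real_derivative phi' x s) (at x)"
    and bnd: "\<And>x s. x \<in> {a<..<b} \<Longrightarrow> \<bar>phi' x s\<bar> \<le> B s"
    and intB: "integrable lborel B"
    and meas: "phi' x0 \<in> borel_measurable lborel"
  shows "((\<lambda>x. LINT s|lborel. phi x s) has_real_derivative (LINT s|lborel. phi' x0 s)) (at x0)"
  unfolding DERIV_def
proof -
  define q where "q h s = (phi (x0 + h) s - phi x0 s) / h" for h s
  have ev: "\<forall>\<^sub>F h in at 0. x0 + h \<in> {a<..<b} \<and> h \<noteq> 0"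
  proof -
    have "\<forall>\<^sub>F h in at (0::real). h \<in> {a - x0<..<b - x0}"
      using x0 by (intro eventually_at_in_open') auto
    moreover have "\<forall>\<^sub>F h in at (0::real). h \<noteq> 0" by (simp add: eventually_at_filter)
    ultimately show ?thesis by eventually_elim auto
  qed
  have qbnd: "\<bar>q h s\<bar> \<le> B s" if h: "x0 + h \<in> {a<..<b}" "h \<noteq> 0" for h s
  proof -
    have D: "\<And>x. x \<in> {a<..<b} \<Longrightarrow> ((\<lambda>x. phi x s) has_real_derivative phi' x s) (at x)" by (rule der)
    show ?thesis
    proof (cases "h > 0")
      case True
      have "\<And>x. x0 \<le> x \<Longrightarrow> x \<le> x0 + h \<Longrightarrow> ((\<lambda>x. phi x s) has_real_derivative phi' x s) (at x)"
        using h x0 by (intro D) auto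
      from MVT2[of x0 "x0+h", OF _ this] True obtain z where z: "z > x0" "z < x0 + h"
        "phi (x0 + h) s - phi x0 s = (x0 + h - x0) * phi' z s" by auto
      have "z \<in> {a<..<b}" using z h x0 by auto
      then have "\<bar>phi' z s\<bar> \<le> B s" by (rule bnd)
      moreover have "q h s = phi' z s" using z True unfolding q_def by (simp add: field_simps)
      ultimately show ?thesis by simp
    next
      case False
      then have hn: "h < 0" using h by auto
      have "\<And>x. x0 + h \<le> x \<Longrightarrow> x \<le> x0 \<Longrightarrow> ((\<lambda>x. phi x s) has_real_derivative phi' x s) (at x)"
        using h x0 by (intro D) auto
      from MVT2[of "x0+h" x0, OF _ this] hn obtain z where z: "z > x0 + h" "z < x0"
        "phi x0 s - phi (x0 + h) s = (x0 - (x0 + h)) * phi' z s" by auto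
      have "z \<in> {a<..<b}" using z h x0 by auto
      then have "\<bar>phi' z s\<bar> \<le> B s" by (rule bnd)
      moreover have "q h s = phi' z s" using z hn unfolding q_def by (simp add: field_simps)
      ultimately show ?thesis by simp
    qed
  qed
  have "((\<lambda>h. LINT s|lborel. q h s) \<longlongrightarrow> (LINT s|lborel. phi' x0 s)) (at 0)"
  proof (rule dct_within[where B=B])
    show "\<forall>\<^sub>F h in at 0. (\<forall>s. \<bar>q h s\<bar> \<le> B s) \<and> q h \<in> borel_measurable lborel"
      using ev
    proof eventually_elim
      case (elim h)
      then show ?case using qbnd[of h] int[of "x0+h"] int[of x0] x0
        unfolding q_def[abs_def] by auto
    qed
    show "integrable lborel B" by fact
    show "((\<lambda>h. q h s) \<longlongrightarrow> phi' x0 s) (at 0)" for s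
      using der[of x0 s] x0 unfolding DERIV_def q_def by auto
    show "phi' x0 \<in> borel_measurable lborel" by fact
  qed
  moreover have "\<forall>\<^sub>F h in at 0. (LINT s|lborel. q h s) =
      ((LINT s|lborel. phi (x0 + h) s) - (LINT s|lborel. phi x0 s)) / h"
    using ev
  proof eventually_elim
    case (elim h)
    then show ?case using int[of "x0+h"] int[of x0] x0 unfolding q_def
      by (simp add: integral_diff)
  qed
  ultimately show "((\<lambda>h. ((LINT s|lborel. phi (x0 + h) s) - (LINT s|lborel. phi x0 s)) / h)
      \<longlongrightarrow> (LINT s|lborel. phi' x0 s)) (at 0)"
    by (simp add: tendsto_cong)
qed

lemma lborel_iff_absint:
  fixes f :: "real \<Rightarrow> real"
  assumes "f \<in> borel_measurable lborel"
  shows "integrable lborel f \<longleftrightarrow> f absolutely_integrable_on UNIV"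
  using assms integrable_completion[of f lborel] unfolding set_integrable_def
  by simp

lemma inv_subst:
  fixes g :: "real \<Rightarrow> real"
  assumes int: "integrable lborel (\<lambda>q. if q > 0 then g q else 0)"
    and meas: "(\<lambda>r. if r > 0 then g (1/r) / r\<^sup>2 else 0) \<in> borel_measurable lborel"
  shows "integrable lborel (\<lambda>r. if r > 0 then g (1/r) / r\<^sup>2 else 0)"
    and "(LINT r|lborel. (if r > 0 then g (1/r) / r\<^sup>2 else 0)) = (LINT q|lborel. (if q > 0 then g q else 0))"
proof -
  let ?F = "\<lambda>q. if q > 0 then g q else 0"
  let ?G = "\<lambda>r. if r > 0 then g (1/r) / r\<^sup>2 else 0"
  define S :: "real set" where "S = {0<..}"
  have Fm: "?F \<in> borel_measurable lborel" using int by auto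
  have "?F absolutely_integrable_on UNIV" using int lborel_iff_absint[OF Fm] by simp
  moreover have "?F = (\<lambda>x. if x \<in> S then g x else 0)" by (auto simp: S_def)
  ultimately have gS: "g absolutely_integrable_on S" using absolutely_integrable_restrict_UNIV by metis
  have IF: "(LINT q|lborel. ?F q) = integral S g"
    using integral_lborel[OF int] \<open>?F = _\<close> integral_restrict_UNIV[of S g] by simp
  have img: "(\<lambda>r::real. 1/r) ` S = S"
  proof
    show "(\<lambda>r::real. 1/r) ` S \<subseteq> S" by (auto simp: S_def)
    show "S \<subseteq> (\<lambda>r::real. 1/r) ` S"
    proof
      fix x assume "x \<in> S"
      then have "x = 1/(1/x)" "1/x \<in> S" by (auto simp: S_def)
      then show "x \<in> (\<lambda>r::real. 1/r) ` S" by blast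
    qed
  qed
  have cov: "(\<lambda>x. \<bar>- 1 / x\<^sup>2\<bar> * g (1/x)) absolutely_integrable_on S \<and>
           integral S (\<lambda>x. \<bar>- 1 / x\<^sup>2\<bar> * g (1/x)) = integral S g
     \<longleftrightarrow> g absolutely_integrable_on ((\<lambda>r. 1/r) ` S) \<and> integral ((\<lambda>r. 1/r) ` S) g = integral S g"
  proof (rule has_absolute_integral_change_of_variables_1')
    show "S \<in> sets lebesgue" by (simp add: S_def)
    show "((\<lambda>r. 1/r) has_real_derivative - 1 / x\<^sup>2) (at x within S)" if "x \<in> S" for x
      using that by (auto intro!: derivative_eq_intros simp: S_def power2_eq_square field_simps)
    show "inj_on (\<lambda>r::real. 1/r) S" by (auto simp: inj_on_def S_def)
  qed
  have eqS: "\<And>x. x \<in> S \<Longrightarrow> \<bar>- 1 / x\<^sup>2\<bar> * g (1/x) = g (1/x) / x\<^sup>2" by (simp add: S_def)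
  from cov gS img have A: "(\<lambda>x. \<bar>- 1 / x\<^sup>2\<bar> * g (1/x)) absolutely_integrable_on S"
     and B: "integral S (\<lambda>x. \<bar>- 1 / x\<^sup>2\<bar> * g (1/x)) = integral S g" by auto
  have A': "(\<lambda>x. g (1/x) / x\<^sup>2) absolutely_integrable_on S"
    using absolutely_integrable_spike_eq[of "{}" S "(\<lambda>x. \<bar>- 1 / x\<^sup>2\<bar> * g (1/x))" "(\<lambda>x. g (1/x) / x\<^sup>2)"] A eqS by auto
  have B': "integral S (\<lambda>x. g (1/x) / x\<^sup>2) = integral S g"
    using B integral_cong[of S "(\<lambda>x. \<bar>- 1 / x\<^sup>2\<bar> * g (1/x))" "(\<lambda>x. g (1/x) / x\<^sup>2)"] eqS by auto
  have Geq: "?G = (\<lambda>x. if x \<in> S then g (1/x) / x\<^sup>2 else 0)" by (auto simp: S_def)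
  have GU: "?G absolutely_integrable_on UNIV" using A' Geq absolutely_integrable_restrict_UNIV by metis
  show intG: "integrable lborel ?G" using GU lborel_iff_absint[OF meas] by simp
  show "(LINT r|lborel. ?G r) = (LINT q|lborel. ?F q)"
    using integral_lborel[OF intG] Geq integral_restrict_UNIV[of S "\<lambda>x. g (1/x) / x\<^sup>2"] B' IF by simp
qed

lemma gamma_lint1:
  fixes p :: real
  assumes p: "p > 0"
  shows "integrable lborel (\<lambda>t. if t > 0 then t powr (p - 1) * exp (- t) else 0)"
    and "(LINT t|lborel. (if t > 0 then t powr (p - 1) * exp (- t) else 0)) = Gamma p"
proof -
  have eq: "(\<lambda>t. indicator {0..} t * t powr (p - 1) / exp t) = (\<lambda>t::real. if t > 0 then t powr (p - 1) * exp (- t) else 0)"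
    by (auto simp: indicator_def exp_minus field_simps)
  have nn: "(\<integral>\<^sup>+t. ennreal (if t > 0 then t powr (p - 1) * exp (- t) else 0) \<partial>lborel) = ennreal (Gamma p)"
    using Gamma_conv_nn_integral_real[OF p] eq by metis
  have hb: "has_bochner_integral lborel (\<lambda>t::real. if t > 0 then t powr (p - 1) * exp (- t) else 0) (Gamma p)"
    by (rule has_bochner_integral_nn_integral[OF _ _ _ nn]) (use p in \<open>auto intro: Gamma_real_pos less_imp_le\<close>)
  then show "integrable lborel (\<lambda>t. if t > 0 then t powr (p - 1) * exp (- t) else 0)"
    and "(LINT t|lborel. (if t > 0 then t powr (p - 1) * exp (- t) else 0)) = Gamma p"
    by (auto simp: has_bochner_integral_iff)
qed

lemma gamma_lint:
  fixes p c :: real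
  assumes p: "p > 0" and c: "c > 0"
  shows "integrable lborel (\<lambda>t. if t > 0 then t powr (p - 1) * exp (- c * t) else 0)"
    and "(LINT t|lborel. (if t > 0 then t powr (p - 1) * exp (- c * t) else 0)) = Gamma p / c powr p"
proof -
  let ?f = "\<lambda>t::real. if t > 0 then t powr (p - 1) * exp (- t) else 0"
  have e: "(\<lambda>x. ?f (0 + c * x)) = (\<lambda>x. c powr (p - 1) * (if x > 0 then x powr (p - 1) * exp (- c * x) else 0))"
    using c by (auto simp: powr_mult zero_less_mult_iff)
  have i: "integrable lborel (\<lambda>x. ?f (0 + c * x))"
    using lborel_integrable_real_affine[OF gamma_lint1(1)[OF p], of c 0] c by simp
  then show "integrable lborel (\<lambda>t. if t > 0 then t powr (p - 1) * exp (- c * t) else 0)"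
    unfolding e using c by simp
  have "Gamma p = c * (LINT x|lborel. ?f (0 + c * x))"
    using lborel_integral_real_affine[of c ?f 0] gamma_lint1(2)[OF p] c by simp
  also have "\<dots> = c * c powr (p - 1) * (LINT t|lborel. (if t > 0 then t powr (p - 1) * exp (- c * t) else 0))"
    unfolding e by simp
  also have "c * c powr (p - 1) = c powr p" using c by (simp add: powr_diff field_simps)
  finally show "(LINT t|lborel. (if t > 0 then t powr (p - 1) * exp (- c * t) else 0)) = Gamma p / c powr p"
    using c by (simp add: field_simps)
qed

lemma beta1:
  fixes p :: real
  assumes p: "p > 0"
  shows "integrable lborel (\<lambda>q. if 0 < q \<and> q < 1 then q powr (p - 1) else 0)"
    and "(LINT q|lborel. (if 0 < q \<and> q < 1 then q powr (p - 1) else 0)) = 1 / p"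
proof -
  have B: "((\<lambda>t. t powr (p - 1) * (1 - t) powr (1 - 1)) has_integral Beta p 1) {0..1}"
    using has_integral_Beta_real[OF p, of 1] by simp
  have nn0: "integral\<^sup>N lborel (\<lambda>x. indicator {0..1} x * (x powr (p - 1) * (1 - x) powr (1 - 1))) = Beta p 1"
    by (rule nn_integral_has_integral_lebesgue[OF _ B]) auto
  have eq: "(\<lambda>x::real. indicator {0..1} x * (x powr (p - 1) * (1 - x) powr (1 - 1))) =
      (\<lambda>q. if 0 < q \<and> q < 1 then q powr (p - 1) else 0)"
    by (auto simp: indicator_def fun_eq_iff)
  have bet: "Beta p 1 = 1 / p"
  proof -
    have "p \<notin> \<int>\<^sub>\<le>\<^sub>0" using p by auto
    then have "Gamma (p + 1) = p * Gamma p" by (rule Gamma_plus1)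
    moreover have "Gamma p \<noteq> 0" using Gamma_real_pos[OF p] by simp
    ultimately show ?thesis using p by (simp add: Beta_def field_simps add.commute)
  qed
  have nn: "(\<integral>\<^sup>+q. ennreal (if 0 < q \<and> q < 1 then q powr (p - 1) else 0) \<partial>lborel) = ennreal (1 / p)"
    using nn0 eq bet by metis
  have hb: "has_bochner_integral lborel (\<lambda>q::real. if 0 < q \<and> q < 1 then q powr (p - 1) else 0) (1 / p)"
    by (rule has_bochner_integral_nn_integral[OF _ _ _ nn]) (use p in auto)
  then show "integrable lborel (\<lambda>q. if 0 < q \<and> q < 1 then q powr (p - 1) else 0)"
    and "(LINT q|lborel. (if 0 < q \<and> q < 1 then q powr (p - 1) else 0)) = 1 / p"
    by (auto simp: has_bochner_integral_iff)
qed

definition kf :: "real \<Rightarrow> real" where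
  "kf q = (if q > 0 then (exp (- q) - (if q < 1 then 1 else 0)) / q else 0)"

definition Bk :: "real \<Rightarrow> real" where
  "Bk q = (if 0 < q \<and> q < 1 then 1 else 0) + (if q > 0 then exp (- q) else 0)"

lemma Bk_int: "integrable lborel Bk"
proof -
  have 1: "integrable lborel (\<lambda>q::real. if 0 < q \<and> q < 1 then 1 else (0::real))"
  proof -
    have "(\<lambda>q::real. if 0 < q \<and> q < 1 then q powr (1 - 1) else 0) = (\<lambda>q::real. if 0 < q \<and> q < 1 then 1 else (0::real))"
      by (auto simp: fun_eq_iff)
    then show ?thesis using beta1(1)[of 1] by simp
  qed
  have 2: "integrable lborel (\<lambda>q::real. if q > 0 then exp (- q) else 0)"
    using gamma_lint(1)[of 1 1] by (simp cong: if_cong)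
  show ?thesis unfolding Bk_def[abs_def] using 1 2 by simp
qed

lemma exp_neg_ge: "1 - x \<le> exp (- x)" for x :: real
  using exp_ge_add_one_self[of "-x"] by simp

lemma kf_bound: "\<bar>kf q\<bar> \<le> Bk q"
proof (cases "q > 0")
  case True
  show ?thesis
  proof (cases "q < 1")
    case True
    have "1 - exp (- q) \<le> q" using exp_neg_ge[of q] by simp
    moreover have "exp (- q) \<le> 1" using \<open>q > 0\<close> by simp
    ultimately have "\<bar>(exp (- q) - 1) / q\<bar> \<le> 1" using \<open>q>0\<close> by (simp add: abs_div divide_le_eq)
    moreover have "kf q = (exp (- q) - 1) / q" "Bk q = 1 + exp (- q)" using True \<open>q>0\<close> by (simp_all add: kf_def Bk_def)
    ultimately show ?thesis using exp_gt_zero[of "-q"] by linarith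
  next
    case False
    then have "exp (- q) / q \<le> exp (- q)" by (simp add: divide_le_eq)
    then show ?thesis using False \<open>q>0\<close> by (simp add: kf_def Bk_def)
  qed
qed (simp add: kf_def Bk_def)

lemma kf_meas: "kf \<in> borel_measurable lborel"
  unfolding kf_def[abs_def] by measurable

lemma kf_int: "integrable lborel kf"
proof (rule Bochner_Integration.integrable_bound[OF Bk_int kf_meas])
  show "AE x in lborel. norm (kf x) \<le> norm (Bk x)"
    using kf_bound by (intro AE_I2) (metis abs_ge_self order_trans real_norm_def)
qed

lemma Gamma_minus_inv_lim: "((\<lambda>p::real. Gamma p - 1 / p) \<longlongrightarrow> Digamma 1) (at_right 0)"
proof -
  have d: "(Gamma has_field_derivative Gamma 1 * Digamma 1) (at (1::real))"
    by (rule has_field_derivative_Gamma) simp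
  have "((\<lambda>h. (Gamma (1 + h) - Gamma 1) / h) \<longlongrightarrow> Digamma (1::real)) (at 0)"
    using d unfolding DERIV_def by simp
  then have l: "((\<lambda>h. (Gamma (1 + h) - Gamma 1) / h) \<longlongrightarrow> Digamma (1::real)) (at_right 0)"
    by (rule tendsto_within_subset) simp
  have "\<forall>\<^sub>F p in at_right (0::real). (Gamma (1 + p) - Gamma 1) / p = Gamma p - 1 / p"
  proof (rule eventually_at_rightI[of 0 1])
    fix p :: real assume "p \<in> {0<..<1}"
    then have p: "p > 0" by simp
    have "p \<notin> \<int>\<^sub>\<le>\<^sub>0" using p by auto
    then have "Gamma (p + 1) = p * Gamma p" by (rule Gamma_plus1)
    then show "(Gamma (1 + p) - Gamma 1) / p = Gamma p - 1 / p" using p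
      by (simp add: field_simps add.commute)
  qed simp
  from tendsto_cong[OF this] l show ?thesis by simp
qed

lemma kf_integral: "(LINT q|lborel. kf q) = Digamma 1"
proof -
  define phi where "phi p q = (if q > 0 then q powr (p - 1) * (exp (- q) - (if q < 1 then 1 else 0)) else 0)" for p q :: real
  have phi_eq: "phi p = (\<lambda>q. (if q > 0 then q powr (p - 1) * exp (- 1 * q) else 0) -
       (if 0 < q \<and> q < 1 then q powr (p - 1) else 0))" for p
    by (auto simp: phi_def fun_eq_iff algebra_simps)
  have int_phi: "p > 0 \<Longrightarrow> (LINT q|lborel. phi p q) = Gamma p - 1 / p" for p
    unfolding phi_eq using gamma_lint[of p 1] beta1[of p] by (simp add: integral_diff)
  have bnd: "\<bar>phi p q\<bar> \<le> Bk q" if p: "0 < p" "p < 1" for p q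
  proof (cases "q > 0")
    case True
    show ?thesis
    proof (cases "q < 1")
      case True
      have "1 - exp (- q) \<le> q" using exp_neg_ge[of q] by simp
      moreover have "exp (- q) \<le> 1" using \<open>q > 0\<close> by simp
      ultimately have a: "\<bar>exp (- q) - 1\<bar> \<le> q" by simp
      have "\<bar>phi p q\<bar> = q powr (p - 1) * \<bar>exp (- q) - 1\<bar>" using True \<open>q>0\<close> by (simp add: phi_def abs_mult)
      also have "\<dots> \<le> q powr (p - 1) * q" by (rule mult_left_mono[OF a]) simp
      also have "\<dots> = q powr p" using \<open>q>0\<close> by (simp add: powr_diff field_simps)
      also have "\<dots> \<le> 1" using True \<open>q>0\<close> p by (simp add: powr_le1)
      finally show ?thesis using True \<open>q>0\<close> by (simp add: Bk_def add_increasing2)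
    next
      case False
      have "q powr (p - 1) \<le> q powr 0" using False p by (intro powr_mono) auto
      then have "q powr (p - 1) \<le> 1" using \<open>q > 0\<close> by simp
      then have "q powr (p - 1) * exp (- q) \<le> 1 * exp (- q)" by (intro mult_right_mono) auto
      then show ?thesis using False \<open>q>0\<close> by (simp add: phi_def Bk_def)
    qed
  qed (simp add: phi_def Bk_def)
  have lim: "((\<lambda>p. LINT q|lborel. phi p q) \<longlongrightarrow> (LINT q|lborel. kf q)) (at_right 0)"
  proof (rule dct_within[where B=Bk])
    show "\<forall>\<^sub>F p in at_right 0. (\<forall>q. \<bar>phi p q\<bar> \<le> Bk q) \<and> phi p \<in> borel_measurable lborel"
    proof (rule eventually_at_rightI[of 0 1])
      fix p :: real assume "p \<in> {0<..<1}"
      then show "(\<forall>q. \<bar>phi p q\<bar> \<le> Bk q) \<and> phi p \<in> borel_measurable lborel"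
        using bnd[of p] unfolding phi_def[abs_def] by auto
    qed simp
    show "integrable lborel Bk" by (rule Bk_int)
    show "((\<lambda>p. phi p q) \<longlongrightarrow> kf q) (at_right 0)" for q
    proof (cases "q > 0")
      case True
      have "((\<lambda>p. q powr (p - 1) * (exp (- q) - (if q < 1 then 1 else 0))) \<longlongrightarrow>
          q powr (0 - 1) * (exp (- q) - (if q < 1 then 1 else 0))) (at_right 0)"
        using True by (intro tendsto_intros) auto
      moreover have "q powr (0 - 1) = 1 / q" using True by (simp add: powr_minus divide_inverse)
      ultimately show ?thesis using True by (simp add: phi_def kf_def)
    qed (simp add: phi_def kf_def)
    show "kf \<in> borel_measurable lborel" by (rule kf_meas)
  qed
  have lim2: "((\<lambda>p. LINT q|lborel. phi p q) \<longlongrightarrow> Digamma 1) (at_right 0)"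
  proof -
    have "\<forall>\<^sub>F p in at_right (0::real). Gamma p - 1 / p = (LINT q|lborel. phi p q)"
      by (rule eventually_at_rightI[of 0 1]) (simp_all add: int_phi)
    from tendsto_cong[OF this] Gamma_minus_inv_lim show ?thesis by simp
  qed
  show ?thesis using tendsto_unique[OF _ lim lim2] by simp
qed

lemma exp_neg_mult_le1: "y > 0 \<Longrightarrow> exp (- y) * y \<le> (1::real)"
proof -
  assume y: "y > 0"
  have "y \<le> exp y" using exp_ge_add_one_self[of y] by linarith
  then show ?thesis by (simp add: exp_minus field_simps)
qed

lemma exp_neg_mult_le2: "y > 0 \<Longrightarrow> exp (- y) * y\<^sup>2 \<le> (4::real)"
proof -
  assume y: "y > 0"
  have "y / 2 \<le> exp (y / 2)" using exp_ge_add_one_self[of "y/2"] by linarith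
  then have "(y/2)\<^sup>2 \<le> (exp (y/2))\<^sup>2" using y by (intro power_mono) auto
  also have "(exp (y/2))\<^sup>2 = exp y" by (simp add: power2_eq_square flip: exp_add)
  finally show ?thesis by (simp add: exp_minus field_simps power2_eq_square)
qed

definition hf :: "real \<Rightarrow> real \<Rightarrow> real" where
  "hf z s = (if s > 0 then exp (- s - z / s) / s else 0)"
definition hf1 :: "real \<Rightarrow> real \<Rightarrow> real" where
  "hf1 z s = (if s > 0 then - (exp (- s - z / s) / s\<^sup>2) else 0)"
definition HH :: "real \<Rightarrow> real" where "HH z = (LINT s|lborel. hf z s)"
definition HH1 :: "real \<Rightarrow> real" where "HH1 z = (LINT s|lborel. hf1 z s)"

lemma expint: "integrable lborel (\<lambda>s::real. if s > 0 then exp (- s) else 0)"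
  using gamma_lint(1)[of 1 1] by (simp cong: if_cong)

lemma hf_meas[measurable]: "hf z \<in> borel_measurable lborel"
  unfolding hf_def[abs_def] by measurable
lemma hf1_meas[measurable]: "hf1 z \<in> borel_measurable lborel"
  unfolding hf1_def[abs_def] by measurable

lemma hf_bound: "z > 0 \<Longrightarrow> \<bar>hf z s\<bar> \<le> (1 / z) * (if s > 0 then exp (- s) else 0)"
proof (cases "s > 0")
  case True
  assume z: "z > 0"
  have "exp (- (z / s)) * (z / s) \<le> 1" using z True by (intro exp_neg_mult_le1) simp
  then have a: "exp (- (z / s)) / s \<le> 1 / z" using z True by (simp add: field_simps)
  have e: "exp (- s - z / s) = exp (- s) * exp (- (z / s))" by (simp flip: exp_add)
  have "\<bar>hf z s\<bar> = exp (- s) * (exp (- (z / s)) / s)" using True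
    by (simp add: hf_def e)
  also have "\<dots> \<le> exp (- s) * (1 / z)" by (rule mult_left_mono[OF a]) simp
  finally show ?thesis using True by simp
qed (simp add: hf_def)

lemma hf_int: assumes z: "z > 0" shows "integrable lborel (hf z)"
proof -
  have ae: "AE x in lborel. norm (hf z x) \<le> norm ((1/z) * (if x > 0 then exp (- x) else 0))"
  proof (rule AE_I2)
    fix x
    have "norm ((1/z) * (if x > 0 then exp (- x) else 0)) = (1/z) * (if x > 0 then exp (- x) else 0)"
      using z by simp
    then show "norm (hf z x) \<le> norm ((1/z) * (if x > 0 then exp (- x) else 0))"
      using hf_bound[OF z, of x] by (simp only: real_norm_def)
  qed
  have i: "integrable lborel (\<lambda>x. (1/z) * (if x > 0 then exp (- x) else 0))" using expint by simp
  show ?thesis by (rule Bochner_Integration.integrable_bound[OF i hf_meas ae])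
qed

lemma hf1_bound: "z > 0 \<Longrightarrow> \<bar>hf1 z s\<bar> \<le> (4 / z\<^sup>2) * (if s > 0 then exp (- s) else 0)"
proof (cases "s > 0")
  case True
  assume z: "z > 0"
  have "exp (- (z / s)) * (z / s)\<^sup>2 \<le> 4" using z True by (intro exp_neg_mult_le2) simp
  then have a: "exp (- (z / s)) / s\<^sup>2 \<le> 4 / z\<^sup>2" using z True by (simp add: field_simps power2_eq_square)
  have e: "exp (- s - z / s) = exp (- s) * exp (- (z / s))" by (simp flip: exp_add)
  have "\<bar>hf1 z s\<bar> = exp (- s) * (exp (- (z / s)) / s\<^sup>2)" using True
    by (simp add: hf1_def e)
  also have "\<dots> \<le> exp (- s) * (4 / z\<^sup>2)" by (rule mult_left_mono[OF a]) simp
  finally show ?thesis using True by (simp add: mult.commute)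
qed (simp add: hf1_def)

lemma HH_deriv:
  assumes z: "z > 0"
  shows "(HH has_real_derivative HH1 z) (at z)"
proof -
  have "((\<lambda>y. LINT s|lborel. hf y s) has_real_derivative (LINT s|lborel. hf1 z s)) (at z)"
  proof (rule leibniz_lint[where a="z/2" and b="2*z" and B="\<lambda>s. (4 / (z/2)\<^sup>2) * (if s > 0 then exp (- s) else 0)"])
    show "z/2 < z" "z < 2*z" using z by auto
    show "integrable lborel (hf y)" if "y \<in> {z/2<..<2*z}" for y using that z by (intro hf_int) auto
    show "((\<lambda>y. hf y s) has_real_derivative hf1 y s) (at y)" for y s
    proof (cases "s > 0")
      case True
      then show ?thesis unfolding hf_def hf1_def
        by (auto intro!: derivative_eq_intros simp: power2_eq_square field_simps)
    qed (simp add: hf_def hf1_def)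
    show "\<bar>hf1 y s\<bar> \<le> (4 / (z/2)\<^sup>2) * (if s > 0 then exp (- s) else 0)" if "y \<in> {z/2<..<2*z}" for y s
    proof -
      have y: "y > 0" "z/2 \<le> y" using that z by auto
      have "\<bar>hf1 y s\<bar> \<le> (4 / y\<^sup>2) * (if s > 0 then exp (- s) else 0)" using hf1_bound y by auto
      also have "\<dots> \<le> (4 / (z/2)\<^sup>2) * (if s > 0 then exp (- s) else 0)"
        using y z by (intro mult_right_mono divide_left_mono power_mono) auto
      finally show ?thesis .
    qed
    show "integrable lborel (\<lambda>s. (4 / (z/2)\<^sup>2) * (if s > 0 then exp (- s) else 0))"
      using expint by simp
    show "hf1 z \<in> borel_measurable lborel" by measurable
  qed
  then show ?thesis unfolding HH_def[abs_def] HH1_def by simp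
qed

lemma int_bound:
  fixes f B :: "real \<Rightarrow> real"
  assumes "integrable lborel B" "f \<in> borel_measurable lborel" "\<And>x. \<bar>f x\<bar> \<le> B x"
  shows "integrable lborel f"
proof (rule Bochner_Integration.integrable_bound[OF assms(1,2)])
  show "AE x in lborel. norm (f x) \<le> norm (B x)"
    using assms(3) by (intro AE_I2) (metis abs_ge_self order_trans real_norm_def)
qed

lemma w_int: "integrable lborel (\<lambda>r::real. if r > 0 then exp (- (1/r)) / r\<^sup>2 else 0)"
  and w_integral: "(LINT r::real|lborel. (if r > 0 then exp (- (1/r)) / r\<^sup>2 else 0)) = 1"
proof -
  have i: "integrable lborel (\<lambda>q::real. if q > 0 then exp (- q) else 0)" by (rule expint)
  have v: "(LINT q|lborel. (if q > 0 then exp (- q) else 0)) = (1::real)"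
    using gamma_lint(2)[of 1 1] by (simp cong: if_cong)
  have m: "(\<lambda>r::real. if r > 0 then exp (- (1/r)) / r\<^sup>2 else 0) \<in> borel_measurable lborel" by measurable
  show "integrable lborel (\<lambda>r::real. if r > 0 then exp (- (1/r)) / r\<^sup>2 else 0)"
  proof -
    have "integrable lborel (\<lambda>r. if r > 0 then (\<lambda>q. exp (- q)) (1/r) / r\<^sup>2 else (0::real))"
      by (rule inv_subst(1)) (use i m in auto)
    then show ?thesis by simp
  qed
  show "(LINT r::real|lborel. (if r > 0 then exp (- (1/r)) / r\<^sup>2 else 0)) = 1"
    using inv_subst(2)[of "\<lambda>q. exp (- q)"] i m v by simp
qed

lemma zHH1_lim: "((\<lambda>z. z * HH1 z) \<longlongrightarrow> -1) (at_right 0)"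
proof -
  define phi where "phi z r = (if r > 0 then exp (- (z * r)) * (exp (- (1/r)) / r\<^sup>2) else 0)" for z r :: real
  have eq: "z * HH1 z = - (LINT r|lborel. phi z r)" if z: "z > 0" for z
  proof -
    have "HH1 z = \<bar>z\<bar> *\<^sub>R (LINT x|lborel. hf1 z (0 + z * x))"
      unfolding HH1_def using z by (intro lborel_integral_real_affine) simp
    also have "(\<lambda>x. hf1 z (0 + z * x)) = (\<lambda>x. (- 1 / z\<^sup>2) * phi z x)"
    proof
      fix x
      show "hf1 z (0 + z * x) = (- 1 / z\<^sup>2) * phi z x"
      proof (cases "x > 0")
        case True
        have e0: "- (z * x) - z / (z * x) = - (z * x) + - (1 / x)" using z by simp
        have e: "exp (- (z * x) - z / (z * x)) = exp (- (z * x)) * exp (- (1 / x))"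
          unfolding e0 exp_add ..
        have "hf1 z (0 + z * x) = - (exp (- (z * x) - z / (z * x)) / (z * x)\<^sup>2)"
          using True z unfolding hf1_def by (simp add: zero_less_mult_iff)
        also have "\<dots> = - (exp (- (z * x)) * exp (- (1 / x)) / (z * x)\<^sup>2)" by (simp only: e)
        also have "\<dots> = (- 1 / z\<^sup>2) * phi z x" using True z unfolding phi_def
          by (simp add: field_simps power2_eq_square)
        finally show ?thesis .
      qed (use z in \<open>simp add: hf1_def phi_def zero_less_mult_iff\<close>)
    qed
    finally show ?thesis using z by (simp add: power2_eq_square)
  qed
  have lim: "((\<lambda>z. LINT r|lborel. phi z r) \<longlongrightarrow> (LINT r|lborel. (if r > 0 then exp (- (1/r)) / r\<^sup>2 else 0))) (at_right 0)"
  proof (rule dct_within[where B="\<lambda>r. if r > 0 then exp (- (1/r)) / r\<^sup>2 else 0"])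
    show "\<forall>\<^sub>F z in at_right 0. (\<forall>r. \<bar>phi z r\<bar> \<le> (if r > 0 then exp (- (1/r)) / r\<^sup>2 else 0)) \<and> phi z \<in> borel_measurable lborel"
    proof (rule eventually_at_rightI[of 0 1])
      fix z :: real assume "z \<in> {0<..<1}"
      then have z: "z > 0" by simp
      have "\<bar>phi z r\<bar> \<le> (if r > 0 then exp (- (1/r)) / r\<^sup>2 else 0)" for r
      proof (cases "r > 0")
        case True
        have "exp (- (z * r)) \<le> 1" using z True by simp
        then have "exp (- (z * r)) * (exp (- (1/r)) / r\<^sup>2) \<le> 1 * (exp (- (1/r)) / r\<^sup>2)"
          by (intro mult_right_mono) auto
        then show ?thesis using True by (simp add: phi_def)
      qed (simp add: phi_def)
      moreover have "phi z \<in> borel_measurable lborel" unfolding phi_def[abs_def] by measurable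
      ultimately show "(\<forall>r. \<bar>phi z r\<bar> \<le> (if r > 0 then exp (- (1/r)) / r\<^sup>2 else 0)) \<and> phi z \<in> borel_measurable lborel"
        by blast
    qed simp
    show "integrable lborel (\<lambda>r::real. if r > 0 then exp (- (1/r)) / r\<^sup>2 else 0)" by (rule w_int)
    show "((\<lambda>z. phi z r) \<longlongrightarrow> (if r > 0 then exp (- (1/r)) / r\<^sup>2 else 0)) (at_right 0)" for r
    proof (cases "r > 0")
      case True
      have "((\<lambda>z. exp (- (z * r)) * (exp (- (1/r)) / r\<^sup>2)) \<longlongrightarrow> exp (- (0 * r)) * (exp (- (1/r)) / r\<^sup>2)) (at_right 0)"
        by (intro tendsto_intros)
      then show ?thesis using True by (simp add: phi_def)
    qed (simp add: phi_def)
    show "(\<lambda>r::real. if r > 0 then exp (- (1/r)) / r\<^sup>2 else 0) \<in> borel_measurable lborel" by measurable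
  qed
  then have lim': "((\<lambda>z. - (LINT r|lborel. phi z r)) \<longlongrightarrow> -1) (at_right 0)"
    using w_integral by (auto intro: tendsto_minus)
  have "\<forall>\<^sub>F z in at_right (0::real). - (LINT r|lborel. phi z r) = z * HH1 z"
    by (rule eventually_at_rightI[of 0 1]) (simp_all add: eq)
  from tendsto_cong[OF this] lim' show ?thesis by simp
qed

lemma log_int:
  fixes z :: real
  assumes z: "0 < z" "z < 1"
  shows "integrable lborel (\<lambda>s::real. if z < s \<and> s < 1 then 1 / s else 0)"
    and "(LINT s|lborel. (if z < s \<and> s < 1 then 1 / s else 0)) = - ln z"
proof -
  have c: "continuous_on {z..1} (\<lambda>s::real. 1 / s)" using z by (intro continuous_intros) auto
  have si: "set_integrable lborel {z..1} (\<lambda>s::real. 1 / s)" by (rule borel_integrable_atLeastAtMost'[OF c])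
  have ae: "AE s in lborel. indicator {z..1} s *\<^sub>R (1 / s) = (if z < s \<and> s < 1 then 1 / s else (0::real))"
    using AE_lborel_singleton[of z] AE_lborel_singleton[of 1]
    by eventually_elim (auto simp: indicator_def)
  have ftc: "integral\<^sup>L lborel (\<lambda>x. indicator {z .. 1} x *\<^sub>R (1 / x)) = ln 1 - ln (z::real)"
  proof (rule integral_FTC_atLeastAtMost)
    show "z \<le> 1" using z by simp
    show "(ln has_vector_derivative 1 / x) (at x within {z..1})" if "z \<le> x" "x \<le> 1" for x
      using that z by (auto intro!: derivative_eq_intros simp: has_real_derivative_iff_has_vector_derivative[symmetric])
    show "continuous_on {z..1} (\<lambda>s::real. 1 / s)" by (rule c)
  qed
  show "integrable lborel (\<lambda>s::real. if z < s \<and> s < 1 then 1 / s else 0)"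
    using si unfolding set_integrable_def using integrable_cong_AE[OF _ _ ae] by auto
  show "(LINT s|lborel. (if z < s \<and> s < 1 then 1 / s else 0)) = - ln z"
    using ftc integral_cong_AE[OF _ _ ae] by auto
qed

definition Ez :: "real \<Rightarrow> real" where "Ez z = (LINT s|lborel. (if s > z then exp (- s) / s else 0))"

lemma Ez_int: assumes z: "z > 0" shows "integrable lborel (\<lambda>s::real. if s > z then exp (- s) / s else 0)"
proof (rule int_bound[where B="\<lambda>s. (1/z) * (if s > 0 then exp (- s) else 0)"])
  show "integrable lborel (\<lambda>s::real. (1/z) * (if s > 0 then exp (- s) else 0))" using expint by simp
  show "(\<lambda>s::real. if s > z then exp (- s) / s else 0) \<in> borel_measurable lborel" by measurable
  show "\<bar>if s > z then exp (- s) / s else 0\<bar> \<le> (1/z) * (if s > 0 then exp (- s) else 0)" for s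
  proof (cases "s > z")
    case True
    then have "exp (- s) / s \<le> exp (- s) / z" using z by (intro divide_left_mono) auto
    then show ?thesis using True z by simp
  qed (use z in simp)
qed

declare kf_meas[measurable]

lemma Bk_nonneg: "Bk s \<ge> 0" by (simp add: Bk_def)

lemma kf_cut_bound: "\<bar>if s > z then kf s else 0\<bar> \<le> Bk s"
  using kf_bound[of s] Bk_nonneg[of s] by auto

lemma kf_cut_meas[measurable]: "(\<lambda>s. if s > z then kf s else 0) \<in> borel_measurable lborel"
  by measurable

lemma kf_cut_int: "integrable lborel (\<lambda>s. if s > z then kf s else 0)"
  by (rule int_bound[OF Bk_int kf_cut_meas kf_cut_bound])

lemma Ez_ln: assumes z: "0 < z" "z < 1"
  shows "(LINT s|lborel. (if s > z then kf s else 0)) = Ez z + ln z"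
proof -
  have "(\<lambda>s. if s > z then kf s else 0) = (\<lambda>s. (if s > z then exp (- s) / s else 0) - (if z < s \<and> s < 1 then 1 / s else 0))"
    using z by (auto simp: kf_def fun_eq_iff diff_divide_distrib)
  then show ?thesis using Ez_int[of z] log_int[OF z] z by (simp add: integral_diff Ez_def)
qed

lemma lim_cut: "((\<lambda>z. LINT s|lborel. (if s > z then kf s else 0)) \<longlongrightarrow> Digamma 1) (at_right 0)"
proof -
  have "((\<lambda>z. LINT s|lborel. (if s > z then kf s else 0)) \<longlongrightarrow> (LINT s|lborel. kf s)) (at_right 0)"
  proof (rule dct_within[where B=Bk])
    show "\<forall>\<^sub>F z in at_right 0. (\<forall>s. \<bar>if s > z then kf s else 0\<bar> \<le> Bk s) \<and> (\<lambda>s. if s > z then kf s else 0) \<in> borel_measurable lborel"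
      using kf_cut_bound kf_cut_meas by (intro always_eventually) auto
    show "integrable lborel Bk" by (rule Bk_int)
    show "((\<lambda>z. if s > z then kf s else 0) \<longlongrightarrow> kf s) (at_right 0)" for s
    proof (cases "s > 0")
      case True
      have "\<forall>\<^sub>F z in at_right 0. (if s > z then kf s else 0) = kf s"
        by (rule eventually_at_rightI[of 0 s]) (use True in auto)
      then show ?thesis by (rule tendsto_eventually)
    next
      case False
      have "\<forall>\<^sub>F z in at_right 0. (if s > z then kf s else 0) = kf s"
        by (rule eventually_at_rightI[of 0 1]) (use False in \<open>auto simp: kf_def\<close>)
      then show ?thesis by (rule tendsto_eventually)
    qed
    show "kf \<in> borel_measurable lborel" by (rule kf_meas)
  qed
  then show ?thesis using kf_integral by simp
qed

definition L2f :: "real \<Rightarrow> real" where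
  "L2f r = (if r > 0 then (exp (- (1/r)) - (if r > 1 then 1 else 0)) / r else 0)"

lemma L2f_eq: "L2f = (\<lambda>r. if r > 0 then kf (1/r) / r\<^sup>2 else 0)"
proof
  fix r :: real
  show "L2f r = (if r > 0 then kf (1/r) / r\<^sup>2 else 0)"
  proof (cases "r > 0")
    case True
    have "1 / r < 1 \<longleftrightarrow> r > 1" using True by (simp add: divide_less_eq)
    then show ?thesis using True by (simp add: L2f_def kf_def power2_eq_square field_simps)
  qed (simp add: L2f_def)
qed

lemma L2f_meas[measurable]: "L2f \<in> borel_measurable lborel"
  unfolding L2f_def[abs_def] by measurable

lemma L2f_int: "integrable lborel L2f" and L2f_integral: "(LINT r|lborel. L2f r) = Digamma 1"
proof -
  have kfe: "(\<lambda>q. if q > 0 then kf q else 0) = kf" by (auto simp: kf_def fun_eq_iff)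
  have m: "(\<lambda>r. if r > 0 then kf (1/r) / r\<^sup>2 else 0) \<in> borel_measurable lborel"
    using L2f_meas L2f_eq by simp
  show "integrable lborel L2f"
    unfolding L2f_eq by (rule inv_subst(1)) (use kf_int kfe m in auto)
  have "(LINT r|lborel. L2f r) = (LINT q|lborel. (if q > 0 then kf q else 0))"
    unfolding L2f_eq by (rule inv_subst(2)) (use kf_int kfe m in auto)
  then show "(LINT r|lborel. L2f r) = Digamma 1" using kfe kf_integral by simp
qed

definition psi2 :: "real \<Rightarrow> real \<Rightarrow> real" where
  "psi2 z r = exp (- (z * r)) * L2f r"

lemma HH_minus_Ez: assumes z: "z > 0"
  shows "HH z - Ez z = (LINT r|lborel. psi2 z r)"
proof -
  define d where "d s = hf z s - (if s > z then exp (- s) / s else 0)" for s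
  have "HH z - Ez z = (LINT s|lborel. d s)"
    unfolding d_def HH_def Ez_def using hf_int[OF z] Ez_int[OF z] by (simp add: integral_diff)
  also have "\<dots> = \<bar>z\<bar> *\<^sub>R (LINT x|lborel. d (0 + z * x))"
    using z by (intro lborel_integral_real_affine) simp
  also have "(\<lambda>x. d (0 + z * x)) = (\<lambda>x. (1 / z) * psi2 z x)"
  proof
    fix x
    show "d (0 + z * x) = (1 / z) * psi2 z x"
    proof (cases "x > 0")
      case True
      have e0: "- (z * x) - z / (z * x) = - (z * x) + - (1 / x)" using z by simp
      have e: "exp (- (z * x) - z / (z * x)) = exp (- (z * x)) * exp (- (1 / x))"
        unfolding e0 exp_add ..
      have "z * x > 0" using z True by simp
      have c: "z < z * x \<longleftrightarrow> x > 1" using z by simp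
      have "d (0 + z * x) = exp (- (z * x) - z / (z * x)) / (z * x) - (if x > 1 then exp (- (z * x)) / (z * x) else 0)"
        unfolding d_def hf_def using \<open>z * x > 0\<close> c by simp
      also have "\<dots> = exp (- (z * x)) * exp (- (1 / x)) / (z * x) - (if x > 1 then exp (- (z * x)) / (z * x) else 0)"
        by (simp only: e)
      also have "\<dots> = (1 / z) * psi2 z x" using True z unfolding psi2_def L2f_def
        by (simp add: field_simps)
      finally show ?thesis .
    next
      case False
      then have "z * x \<le> 0" "\<not> z < z * x" using z by (auto simp: mult_le_0_iff)
      then show ?thesis using False unfolding d_def hf_def psi2_def L2f_def by auto
    qed
  qed
  finally show ?thesis using z by simp
qed

lemma lim_psi2: "((\<lambda>z. LINT r|lborel. psi2 z r) \<longlongrightarrow> Digamma 1) (at_right 0)"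
proof -
  have "((\<lambda>z. LINT r|lborel. psi2 z r) \<longlongrightarrow> (LINT r|lborel. L2f r)) (at_right 0)"
  proof (rule dct_within[where B="\<lambda>r. \<bar>L2f r\<bar>"])
    show "\<forall>\<^sub>F z in at_right 0. (\<forall>r. \<bar>psi2 z r\<bar> \<le> \<bar>L2f r\<bar>) \<and> psi2 z \<in> borel_measurable lborel"
    proof (rule eventually_at_rightI[of 0 1])
      fix z :: real assume "z \<in> {0<..<1}"
      then have z: "z > 0" by simp
      have "\<bar>psi2 z r\<bar> \<le> \<bar>L2f r\<bar>" for r
      proof (cases "r > 0")
        case True
        have "exp (- (z * r)) \<le> 1" using z True by simp
        then have "exp (- (z * r)) * \<bar>L2f r\<bar> \<le> 1 * \<bar>L2f r\<bar>" by (intro mult_right_mono) auto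
        then show ?thesis by (simp add: psi2_def abs_mult)
      qed (simp add: psi2_def L2f_def)
      then show "(\<forall>r. \<bar>psi2 z r\<bar> \<le> \<bar>L2f r\<bar>) \<and> psi2 z \<in> borel_measurable lborel"
        unfolding psi2_def[abs_def] by auto
    qed simp
    show "integrable lborel (\<lambda>r. \<bar>L2f r\<bar>)" using L2f_int by simp
    show "((\<lambda>z. psi2 z r) \<longlongrightarrow> L2f r) (at_right 0)" for r
    proof -
      have "((\<lambda>z. exp (- (z * r)) * L2f r) \<longlongrightarrow> exp (- (0 * r)) * L2f r) (at_right 0)"
        by (intro tendsto_intros)
      then show ?thesis by (simp add: psi2_def)
    qed
    show "L2f \<in> borel_measurable lborel" by (rule L2f_meas)
  qed
  then show ?thesis using L2f_integral by simp
qed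

lemma HH_ln_lim: "((\<lambda>z. HH z + ln z) \<longlongrightarrow> 2 * Digamma 1) (at_right 0)"
proof -
  have l: "((\<lambda>z. (LINT r|lborel. psi2 z r) + (LINT s|lborel. (if s > z then kf s else 0))) \<longlongrightarrow> Digamma 1 + Digamma 1) (at_right 0)"
    by (intro tendsto_add lim_psi2 lim_cut)
  have "\<forall>\<^sub>F z in at_right (0::real). (LINT r|lborel. psi2 z r) + (LINT s|lborel. (if s > z then kf s else 0)) = HH z + ln z"
  proof (rule eventually_at_rightI[of 0 1])
    fix z :: real assume "z \<in> {0<..<1}"
    then show "(LINT r|lborel. psi2 z r) + (LINT s|lborel. (if s > z then kf s else 0)) = HH z + ln z"
      using HH_minus_Ez[of z] Ez_ln[of z] by simp
  qed simp
  from tendsto_cong[OF this] l show ?thesis by simp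
qed

lemma gd_nonneg: "m > 0 \<Longrightarrow> gamma_dens m t \<ge> 0"
  by (simp add: gamma_dens_def)

lemma gd_meas[measurable]: "gamma_dens m \<in> borel_measurable lborel"
  unfolding gamma_dens_def[abs_def] by measurable

lemma gd_moment:
  fixes k :: real and j :: nat
  assumes k: "k > 0"
  shows "integrable lborel (\<lambda>t. t ^ j * gamma_dens k t)"
    and "(LINT t|lborel. t ^ j * gamma_dens k t) = Gamma (k + j) / (Gamma k * k ^ j)"
proof -
  have eq: "(\<lambda>t. t ^ j * gamma_dens k t) = (\<lambda>t. (k powr k / Gamma k) * (if t > 0 then t powr ((k + j) - 1) * exp (- k * t) else 0))"
  proof
    fix t :: real
    show "t ^ j * gamma_dens k t = (k powr k / Gamma k) * (if t > 0 then t powr ((k + j) - 1) * exp (- k * t) else 0)"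
    proof (cases "t > 0")
      case True
      have "t powr ((k + j) - 1) = t ^ j * t powr (k - 1)"
        using True by (simp add: powr_add[symmetric] powr_realpow[symmetric] algebra_simps)
      then show ?thesis using True by (simp add: gamma_dens_def)
    qed (simp add: gamma_dens_def)
  qed
  have kj: "k + real j > 0" using k by simp
  show "integrable lborel (\<lambda>t. t ^ j * gamma_dens k t)"
    unfolding eq using gamma_lint(1)[OF kj k] by simp
  have "(LINT t|lborel. t ^ j * gamma_dens k t) = (k powr k / Gamma k) * (Gamma (k + j) / k powr (k + j))"
    unfolding eq using gamma_lint(2)[OF kj k] by simp
  also have "\<dots> = Gamma (k + j) / (Gamma k * k ^ j)"
    using k by (simp add: powr_add powr_realpow field_simps)
  finally show "(LINT t|lborel. t ^ j * gamma_dens k t) = Gamma (k + j) / (Gamma k * k ^ j)" .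
qed

lemma gd_int: "m > 0 \<Longrightarrow> integrable lborel (gamma_dens m)"
  using gd_moment(1)[of m 0] by simp

lemma gd_integral: "m > 0 \<Longrightarrow> (LINT t|lborel. gamma_dens m t) = 1"
  using gd_moment(2)[of m 0] by (simp add: Gamma_real_pos[THEN less_imp_neq, symmetric])

lemma gd_cont: "m > 0 \<Longrightarrow> 0 < a \<Longrightarrow> continuous_on {a..b} (gamma_dens m)"
proof -
  assume m: "m > 0" and a: "0 < a"
  have g: "Gamma m \<noteq> 0" using Gamma_real_pos[OF m] by simp
  have "continuous_on {a..b} (\<lambda>t. m powr m * t powr (m - 1) * exp (- m * t) / Gamma m)"
    using a g by (intro continuous_intros) auto
  moreover
  have "continuous_on {a..b} (gamma_dens m) = continuous_on {a..b} (\<lambda>t. m powr m * t powr (m - 1) * exp (- m * t) / Gamma m)"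
    by (rule continuous_on_cong[OF refl]) (use a g in \<open>auto simp: gamma_dens_def\<close>)
  ultimately show ?thesis by simp
qed

definition Gc :: "real \<Rightarrow> real \<Rightarrow> real" where
  "Gc m v = (LINT t|lborel. indicator {..v} t * gamma_dens m t)"

lemma ind_gd_int: "m > 0 \<Longrightarrow> integrable lborel (\<lambda>t. indicator A t * gamma_dens m t)" if "A \<in> sets borel"
  using that by (intro int_bound[OF gd_int]) (auto simp: gd_nonneg indicator_def)

lemma Gc_bounds: "m > 0 \<Longrightarrow> 0 \<le> Gc m v \<and> Gc m v \<le> 1"
proof -
  assume m: "m > 0"
  have "Gc m v \<le> (LINT t|lborel. gamma_dens m t)"
    unfolding Gc_def using m
    by (intro integral_mono ind_gd_int gd_int) (auto simp: indicator_def gd_nonneg)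
  moreover have "0 \<le> Gc m v" unfolding Gc_def using m
    by (intro integral_nonneg_AE AE_I2) (auto simp: gd_nonneg)
  ultimately show ?thesis using gd_integral[OF m] by simp
qed

lemma Gc_mono: "m > 0 \<Longrightarrow> v \<le> w \<Longrightarrow> Gc m v \<le> Gc m w"
  unfolding Gc_def
  by (intro integral_mono ind_gd_int) (auto simp: indicator_def gd_nonneg)

lemma Gc_meas[measurable]: "m > 0 \<Longrightarrow> Gc m \<in> borel_measurable borel"
  by (rule borel_measurable_mono) (auto simp: mono_def Gc_mono)

lemma Gc_deriv:
  assumes m: "m > 0" and v0: "v0 > 0"
  shows "(Gc m has_real_derivative gamma_dens m v0) (at v0)"
proof -
  define a where "a = v0 / 2"
  define b where "b = 2 * v0"
  have ab: "0 < a" "a < v0" "v0 < b" using v0 by (auto simp: a_def b_def)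
  define C0 where "C0 = (LINT t|lborel. indicator {..<a} t * gamma_dens m t)"
  have cont: "continuous_on {a..b} (gamma_dens m)" using gd_cont[OF m ab(1)] .
  have rep: "Gc m v = C0 + integral {a..v} (gamma_dens m)" if "a \<le> v" for v
  proof -
    have "(\<lambda>t. indicator {..v} t * gamma_dens m t) = (\<lambda>t. indicator {..<a} t * gamma_dens m t + indicator {a..v} t * gamma_dens m t)"
      using that by (auto simp: indicator_def fun_eq_iff)
    then have "Gc m v = C0 + (LINT t|lborel. indicator {a..v} t * gamma_dens m t)"
      unfolding Gc_def C0_def using m by (simp add: integral_add ind_gd_int)
    also have "(LINT t|lborel. indicator {a..v} t * gamma_dens m t) = integral {a..v} (gamma_dens m)"
    proof -
      have c2: "continuous_on {a..v} (gamma_dens m)" using gd_cont[OF m ab(1)] .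
      have "set_integrable lborel {a..v} (gamma_dens m)" by (rule borel_integrable_atLeastAtMost'[OF c2])
      from set_borel_integral_eq_integral(2)[OF this] show ?thesis
        by (simp add: set_lebesgue_integral_def)
    qed
    finally show ?thesis .
  qed
  have d: "((\<lambda>v. C0 + integral {a..v} (gamma_dens m)) has_real_derivative gamma_dens m v0) (at v0 within {a..b})"
    using integral_has_real_derivative[OF cont, of v0] ab by (auto intro: derivative_eq_intros)
  have "at v0 within {a..b} = at v0" using ab by (intro at_within_Icc_at) auto
  then have d': "((\<lambda>v. C0 + integral {a..v} (gamma_dens m)) has_real_derivative gamma_dens m v0) (at v0)"
    using d by simp
  show ?thesis
    by (rule has_field_derivative_transform_within_open[OF d', of "{a<..<b}"]) (use ab rep in auto)
qed

lemma Gc_lim0: assumes m: "m > 0" shows "(Gc m \<longlongrightarrow> 0) (at_right 0)"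
proof -
  have "((\<lambda>v. LINT t|lborel. indicator {..v} t * gamma_dens m t) \<longlongrightarrow> (LINT t::real|lborel. (0::real))) (at_right 0)"
  proof (rule dct_within[where B="gamma_dens m"])
    show "\<forall>\<^sub>F v in at_right 0. (\<forall>t. \<bar>indicator {..v} t * gamma_dens m t\<bar> \<le> gamma_dens m t) \<and>
        (\<lambda>t. indicator {..v} t * gamma_dens m t) \<in> borel_measurable lborel"
      using m by (intro always_eventually) (auto simp: indicator_def gd_nonneg)
    show "integrable lborel (gamma_dens m)" using gd_int[OF m] .
    show "((\<lambda>v. indicator {..v} t * gamma_dens m t) \<longlongrightarrow> 0) (at_right 0)" for t
    proof (cases "t > 0")
      case True
      have "\<forall>\<^sub>F v in at_right 0. indicator {..v} t * gamma_dens m t = 0"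
        by (rule eventually_at_rightI[of 0 t]) (use True in \<open>auto simp: indicator_def\<close>)
      then show ?thesis by (rule tendsto_eventually)
    next
      case False
      then show ?thesis by (simp add: gamma_dens_def)
    qed
    show "(\<lambda>t. 0::real) \<in> borel_measurable lborel" by simp
  qed
  then show ?thesis by (simp add: Gc_def[abs_def])
qed

definition Cm :: "real \<Rightarrow> real" where "Cm m = m powr m / Gamma m"

definition Phi :: "real \<Rightarrow> real \<Rightarrow> real" where
  "Phi m u = (LINT s|lborel. gamma_dens m s * Gc m (u / s))"

definition Phi1 :: "real \<Rightarrow> real \<Rightarrow> real" where
  "Phi1 m u = (Cm m)\<^sup>2 * u powr (m - 1) * HH (m\<^sup>2 * u)"

definition Phi2 :: "real \<Rightarrow> real \<Rightarrow> real" where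
  "Phi2 m u = (Cm m)\<^sup>2 * ((m - 1) * u powr (m - 2) * HH (m\<^sup>2 * u) + u powr (m - 1) * m\<^sup>2 * HH1 (m\<^sup>2 * u))"

lemma expint_m: "m > 0 \<Longrightarrow> integrable lborel (\<lambda>s::real. if s > 0 then exp (- m * s) else 0)"
  using gamma_lint(1)[of 1 m] by (simp cong: if_cong)

lemma gd_prod:
  assumes m: "m > 0" and s: "s > 0" and u: "u > 0"
  shows "gamma_dens m s * gamma_dens m (u / s) / s = (Cm m)\<^sup>2 * u powr (m - 1) * (exp (- m * s - m * u / s) / s)"
proof -
  have e: "exp (- m * s - m * u / s) = exp (- m * s) * exp (- m * (u / s))"
    by (simp add: exp_add[symmetric] algebra_simps)
  have p: "(u / s) powr (m - 1) = u powr (m - 1) / s powr (m - 1)" by (rule powr_divide)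
  have "s powr (m - 1) > 0" using s by simp
  then show ?thesis using s u unfolding gamma_dens_def Cm_def e p
    by (simp add: power2_eq_square field_simps)
qed

lemma HH_scaled:
  assumes m: "m > 0" and u: "u > 0"
  shows "(LINT s|lborel. (if s > 0 then exp (- m * s - m * u / s) / s else 0)) = HH (m\<^sup>2 * u)"
proof -
  let ?h = "\<lambda>s::real. if s > 0 then exp (- m * s - m * u / s) / s else 0"
  have "(LINT s|lborel. ?h s) = \<bar>1/m\<bar> *\<^sub>R (LINT x|lborel. ?h (0 + (1/m) * x))"
    using m by (intro lborel_integral_real_affine) simp
  also have "(\<lambda>x. ?h (0 + (1/m) * x)) = (\<lambda>x. m * hf (m\<^sup>2 * u) x)"
  proof
    fix x :: real
    show "?h (0 + (1/m) * x) = m * hf (m\<^sup>2 * u) x"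
    proof (cases "x > 0")
      case True
      have "- m * (x / m) - m * u / (x / m) = - x - m\<^sup>2 * u / x" using m by (simp add: field_simps power2_eq_square)
      then show ?thesis using True m by (simp add: hf_def)
    qed (use m in \<open>simp add: hf_def zero_less_divide_iff\<close>)
  qed
  finally show ?thesis using m by (simp add: HH_def)
qed

lemma Phi1_eq:
  assumes m: "m > 0" and u: "u > 0"
  shows "(LINT s|lborel. gamma_dens m s * gamma_dens m (u / s) / s) = Phi1 m u"
proof -
  have "(\<lambda>s. gamma_dens m s * gamma_dens m (u / s) / s) =
        (\<lambda>s. (Cm m)\<^sup>2 * u powr (m - 1) * (if s > 0 then exp (- m * s - m * u / s) / s else 0))"
  proof
    fix s show "gamma_dens m s * gamma_dens m (u / s) / s =
        (Cm m)\<^sup>2 * u powr (m - 1) * (if s > 0 then exp (- m * s - m * u / s) / s else 0)"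
      using gd_prod[OF m _ u, of s] by (cases "s > 0") (auto simp: gamma_dens_def)
  qed
  then show ?thesis using HH_scaled[OF m u] by (simp add: Phi1_def)
qed

lemma Gc_comp_meas: "m > 0 \<Longrightarrow> (\<lambda>s. Gc m (u / s)) \<in> borel_measurable lborel"
proof -
  assume m: "m > 0"
  have "(\<lambda>s::real. u / s) \<in> borel_measurable borel" by measurable
  from measurable_compose[OF this Gc_meas[OF m]] show ?thesis by (simp add: o_def)
qed

lemma Phi_int: "m > 0 \<Longrightarrow> integrable lborel (\<lambda>s. gamma_dens m s * Gc m (u / s))"
proof -
  assume m: "m > 0"
  show ?thesis
  proof (rule int_bound[OF gd_int[OF m]])
    show "(\<lambda>s. gamma_dens m s * Gc m (u / s)) \<in> borel_measurable lborel"
      using Gc_comp_meas[OF m] by measurable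
    show "\<bar>gamma_dens m s * Gc m (u / s)\<bar> \<le> gamma_dens m s" for s
      using Gc_bounds[OF m, of "u/s"] gd_nonneg[OF m, of s]
      by (simp add: abs_mult mult_left_le)
  qed
qed

lemma Phi_deriv:
  assumes m: "m > 0" and u0: "u0 > 0"
  shows "(Phi m has_real_derivative Phi1 m u0) (at u0)"
proof -
  define M where "M = (u0/2) powr (m - 1) + (2*u0) powr (m - 1)"
  define B where "B s = (Cm m)\<^sup>2 * M * (2 / (m * u0)) * (if s > 0 then exp (- m * s) else 0)" for s
  have "((\<lambda>u. LINT s|lborel. gamma_dens m s * Gc m (u / s)) has_real_derivative
        (LINT s|lborel. gamma_dens m s * gamma_dens m (u0 / s) / s)) (at u0)"
  proof (rule leibniz_lint[where a="u0/2" and b="2*u0" and B=B])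
    show "u0/2 < u0" "u0 < 2*u0" using u0 by auto
    show "integrable lborel (\<lambda>s. gamma_dens m s * Gc m (u / s))" for u by (rule Phi_int[OF m])
    show "((\<lambda>u. gamma_dens m s * Gc m (u / s)) has_real_derivative gamma_dens m s * gamma_dens m (u / s) / s) (at u)"
      if "u \<in> {u0/2<..<2*u0}" for u s
    proof (cases "s > 0")
      case True
      have "u / s > 0" using that u0 True by auto
      have "((\<lambda>u. gamma_dens m s * Gc m (u / s)) has_real_derivative gamma_dens m s * (gamma_dens m (u / s) * (1 / s))) (at u)"
        using True by (intro DERIV_cmult DERIV_chain2[where g="\<lambda>u. u / s" and x=u, OF Gc_deriv[OF m \<open>u / s > 0\<close>]])
           (auto intro!: derivative_eq_intros)
      then show ?thesis by simp
    qed (simp add: gamma_dens_def)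
    show "\<bar>gamma_dens m s * gamma_dens m (u / s) / s\<bar> \<le> B s" if "u \<in> {u0/2<..<2*u0}" for u s
    proof (cases "s > 0")
      case True
      have u: "u > 0" "u0/2 \<le> u" "u \<le> 2*u0" using that u0 by auto
      have pw: "u powr (m - 1) \<le> M"
      proof (cases "m \<ge> 1")
        case True
        then have "u powr (m - 1) \<le> (2*u0) powr (m - 1)" using u by (intro powr_mono2) auto
        moreover have "(u0/2) powr (m - 1) \<ge> 0" by simp
        ultimately show ?thesis unfolding M_def by linarith
      next
        case False
        then have "u powr (m - 1) \<le> (u0/2) powr (m - 1)" using u u0 by (intro powr_mono2') auto
        moreover have "(2*u0) powr (m - 1) \<ge> 0" by simp
        ultimately show ?thesis unfolding M_def by linarith
      qed
      have ex: "exp (- m * (u / s)) / s \<le> 2 / (m * u0)"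
      proof -
        have "exp (- (m * u / s)) * (m * u / s) \<le> 1" using m u True by (intro exp_neg_mult_le1) simp
        then have "exp (- (m * u / s)) / s \<le> 1 / (m * u)" using m u True by (simp add: field_simps)
        also have "1 / (m * u) \<le> 2 / (m * u0)" using m u u0 by (simp add: field_simps)
        finally show ?thesis by simp
      qed
      have "\<bar>gamma_dens m s * gamma_dens m (u / s) / s\<bar> = (Cm m)\<^sup>2 * u powr (m - 1) * (exp (- m * s) * (exp (- m * (u / s)) / s))"
        using gd_prod[OF m True u(1)] True by (simp add: exp_add[symmetric] algebra_simps)
      also have "\<dots> \<le> (Cm m)\<^sup>2 * M * (exp (- m * s) * (2 / (m * u0)))"
        using pw ex True u by (intro mult_mono mult_left_mono) (auto simp: M_def)
      finally show ?thesis using True by (simp add: B_def mult_ac)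
    qed (simp add: gamma_dens_def B_def)
    show "integrable lborel B" unfolding B_def using expint_m[OF m] by simp
    show "(\<lambda>s. gamma_dens m s * gamma_dens m (u0 / s) / s) \<in> borel_measurable lborel" by measurable
  qed
  then show ?thesis using Phi1_eq[OF m u0] by (simp add: Phi_def[abs_def])
qed

lemma Phi_lim0: assumes m: "m > 0" shows "(Phi m \<longlongrightarrow> 0) (at_right 0)"
proof -
  have "((\<lambda>u. LINT s|lborel. gamma_dens m s * Gc m (u / s)) \<longlongrightarrow> (LINT s::real|lborel. (0::real))) (at_right 0)"
  proof (rule dct_within[where B="gamma_dens m"])
    show "\<forall>\<^sub>F u in at_right 0. (\<forall>s. \<bar>gamma_dens m s * Gc m (u / s)\<bar> \<le> gamma_dens m s) \<and>
        (\<lambda>s. gamma_dens m s * Gc m (u / s)) \<in> borel_measurable lborel"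
    proof (intro always_eventually allI conjI)
      fix u s
      show "\<bar>gamma_dens m s * Gc m (u / s)\<bar> \<le> gamma_dens m s"
        using Gc_bounds[OF m, of "u/s"] gd_nonneg[OF m, of s] by (simp add: abs_mult mult_left_le)
      show "(\<lambda>s. gamma_dens m s * Gc m (u / s)) \<in> borel_measurable lborel"
        using Gc_comp_meas[OF m] by measurable
    qed
    show "integrable lborel (gamma_dens m)" by (rule gd_int[OF m])
    show "((\<lambda>u. gamma_dens m s * Gc m (u / s)) \<longlongrightarrow> 0) (at_right 0)" for s
    proof (cases "s > 0")
      case True
      have f: "filterlim (\<lambda>u. u / s) (at_right 0) (at_right 0)"
      proof -
        have "((\<lambda>u. u / s) \<longlongrightarrow> 0 / s) (at_right 0)" using True by (intro tendsto_intros) auto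
        moreover have "\<forall>\<^sub>F u in at_right 0. u / s \<in> {0<..} \<and> u / s \<noteq> 0"
          by (rule eventually_at_rightI[of 0 1]) (use True in auto)
        ultimately show ?thesis unfolding filterlim_at by simp
      qed
      have "((\<lambda>u. Gc m (u / s)) \<longlongrightarrow> 0) (at_right 0)" by (rule filterlim_compose[OF Gc_lim0[OF m] f])
      then have "((\<lambda>u. gamma_dens m s * Gc m (u / s)) \<longlongrightarrow> gamma_dens m s * 0) (at_right 0)"
        by (intro tendsto_intros)
      then show ?thesis by simp
    qed (simp add: gamma_dens_def)
    show "(\<lambda>s. 0::real) \<in> borel_measurable lborel" by simp
  qed
  then show ?thesis by (simp add: Phi_def[abs_def])
qed

lemma Phi1_deriv:
  assumes m: "m > 0" and u: "u > 0"
  shows "(Phi1 m has_real_derivative Phi2 m u) (at u)"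
proof -
  have z: "m\<^sup>2 * u > 0" using m u by simp
  have d1: "((\<lambda>u. HH (m\<^sup>2 * u)) has_real_derivative HH1 (m\<^sup>2 * u) * m\<^sup>2) (at u)"
    by (rule DERIV_chain2[where g="\<lambda>u. m\<^sup>2 * u" and x=u, OF HH_deriv[OF z]]) (auto intro!: derivative_eq_intros)
  have d2: "((\<lambda>u. u powr (m - 1)) has_real_derivative (m - 1) * u powr (m - 1 - 1)) (at u)"
    using u by (auto intro!: derivative_eq_intros)
  have "((\<lambda>u. (Cm m)\<^sup>2 * (u powr (m - 1) * HH (m\<^sup>2 * u))) has_real_derivative
      (Cm m)\<^sup>2 * ((m - 1) * u powr (m - 1 - 1) * HH (m\<^sup>2 * u) + (HH1 (m\<^sup>2 * u) * m\<^sup>2) * u powr (m - 1))) (at u)"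
    by (intro DERIV_cmult DERIV_mult[OF d2 d1])
  then show ?thesis unfolding Phi1_def[abs_def] Phi2_def
    by (simp add: algebra_simps)
qed

lemma little_o_int:
  fixes D D' :: "real \<Rightarrow> real" and m \<delta> :: real
  assumes m: "m > 0" and \<delta>: "\<delta> > 0"
    and der: "\<And>u. 0 < u \<Longrightarrow> u < \<delta> \<Longrightarrow> (D has_real_derivative D' u) (at u)"
    and lim0: "(D \<longlongrightarrow> 0) (at_right 0)"
    and limd: "((\<lambda>u. D' u / u powr (m - 1)) \<longlongrightarrow> 0) (at_right 0)"
  shows "((\<lambda>u. D u / u powr m) \<longlongrightarrow> 0) (at_right 0)"
  unfolding tendsto_iff
proof (intro allI impI)
  fix \<epsilon> :: real assume \<epsilon>: "\<epsilon> > 0"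
  define \<eta> where "\<eta> = \<epsilon> * m / 2"
  have \<eta>: "\<eta> > 0" using \<epsilon> m by (simp add: \<eta>_def)
  from limd[unfolded tendsto_iff, rule_format, OF \<eta>]
  obtain b where b: "b > 0" "\<And>y. 0 < y \<Longrightarrow> y < b \<Longrightarrow> \<bar>D' y / y powr (m - 1)\<bar> < \<eta>"
    unfolding eventually_at_right_field by auto
  define \<delta>2 where "\<delta>2 = min \<delta> b"
  have d2: "\<delta>2 > 0" using b \<delta> by (simp add: \<delta>2_def)
  have Dd: "\<bar>D' v\<bar> \<le> \<eta> * v powr (m - 1)" if "0 < v" "v < \<delta>2" for v
  proof -
    have "\<bar>D' v / v powr (m - 1)\<bar> < \<eta>" using b(2)[of v] that by (simp add: \<delta>2_def)
    moreover have "v powr (m - 1) > 0" using that by simp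
    ultimately show ?thesis by (simp add: abs_div divide_less_eq less_imp_le)
  qed
  have pd: "((\<lambda>v. v powr m) has_real_derivative m * v powr (m - 1)) (at v)" if "v > 0" for v
    using that by (auto intro!: derivative_eq_intros)
  have main: "\<bar>D u\<bar> \<le> \<eta> * u powr m / m" if u: "0 < u" "u < \<delta>2" for u
  proof -
    have step: "\<bar>D u - D t\<bar> \<le> \<eta> * u powr m / m" if t: "0 < t" "t < u" for t
    proof -
      have "D u - \<eta> * u powr m / m \<le> D t - \<eta> * t powr m / m"
      proof (rule DERIV_nonpos_imp_nonincreasing[of t u "\<lambda>v. D v - \<eta> * v powr m / m"])
        show "t \<le> u" using t by simp
        fix x assume x: "t \<le> x" "x \<le> u"
        have x0: "0 < x" "x < \<delta>" "x < \<delta>2" using x t u by (auto simp: \<delta>2_def)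
        have pe: "((\<lambda>v. \<eta> * v powr m / m) has_real_derivative \<eta> * (m * x powr (m - 1)) / m) (at x)"
          by (intro DERIV_cdivide DERIV_cmult pd x0)
        have "((\<lambda>v. D v - \<eta> * v powr m / m) has_real_derivative D' x - \<eta> * (m * x powr (m - 1)) / m) (at x)"
          by (rule DERIV_diff[OF der pe]) (use x0 in auto)
        moreover have "D' x - \<eta> * (m * x powr (m - 1)) / m \<le> 0" using Dd[OF x0(1) x0(3)] m by simp
        ultimately show "\<exists>y. ((\<lambda>v. D v - \<eta> * v powr m / m) has_real_derivative y) (at x) \<and> y \<le> 0" by blast
      qed
      moreover have "D t + \<eta> * t powr m / m \<le> D u + \<eta> * u powr m / m"
      proof (rule DERIV_nonneg_imp_nondecreasing[of t u "\<lambda>v. D v + \<eta> * v powr m / m"])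
        show "t \<le> u" using t by simp
        fix x assume x: "t \<le> x" "x \<le> u"
        have x0: "0 < x" "x < \<delta>" "x < \<delta>2" using x t u by (auto simp: \<delta>2_def)
        have pe: "((\<lambda>v. \<eta> * v powr m / m) has_real_derivative \<eta> * (m * x powr (m - 1)) / m) (at x)"
          by (intro DERIV_cdivide DERIV_cmult pd x0)
        have "((\<lambda>v. D v + \<eta> * v powr m / m) has_real_derivative D' x + \<eta> * (m * x powr (m - 1)) / m) (at x)"
          by (rule DERIV_add[OF der pe]) (use x0 in auto)
        moreover have "D' x + \<eta> * (m * x powr (m - 1)) / m \<ge> 0" using Dd[OF x0(1) x0(3)] m by simp
        ultimately show "\<exists>y. ((\<lambda>v. D v + \<eta> * v powr m / m) has_real_derivative y) (at x) \<and> y \<ge> 0" by blast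
      qed
      moreover have "\<eta> * t powr m / m \<ge> 0" using \<eta> m by simp
      ultimately show ?thesis by linarith
    qed
    have l: "((\<lambda>t. \<bar>D u - D t\<bar>) \<longlongrightarrow> \<bar>D u - 0\<bar>) (at_right 0)"
      by (intro tendsto_intros lim0)
    have ev: "\<forall>\<^sub>F t in at_right 0. \<bar>D u - D t\<bar> \<le> \<eta> * u powr m / m"
      by (rule eventually_at_rightI[of 0 u]) (use step u in auto)
    from tendsto_upperbound[OF l ev] show ?thesis by simp
  qed
  show "\<forall>\<^sub>F u in at_right 0. dist (D u / u powr m) 0 < \<epsilon>"
  proof (rule eventually_at_rightI[of 0 \<delta>2])
    fix u assume "u \<in> {0<..<\<delta>2}"
    then have u: "0 < u" "u < \<delta>2" by auto
    have up: "u powr m > 0" using u by simp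
    have "\<bar>D u / u powr m\<bar> \<le> \<eta> / m" using main[OF u] up m by (simp add: abs_div divide_le_eq field_simps)
    also have "\<eta> / m < \<epsilon>" using \<epsilon> m by (simp add: \<eta>_def)
    finally show "dist (D u / u powr m) 0 < \<epsilon>" by (simp add: dist_real_def)
  qed (rule d2)
qed

definition M1 :: "real \<Rightarrow> real \<Rightarrow> real" where
  "M1 m u = (Cm m)\<^sup>2 * u powr m / m * (- ln (m\<^sup>2 * u) + 2 * Digamma 1 + 1 / m)"

definition M2 :: "real \<Rightarrow> real \<Rightarrow> real" where
  "M2 m u = (Cm m)\<^sup>2 * u powr (m - 2) * ((m - 1) * (- ln (m\<^sup>2 * u) + 2 * Digamma 1) - 1)"

lemma M1_deriv:
  assumes m: "m > 0" and u: "u > 0"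
  shows "(M1 m has_real_derivative (Cm m)\<^sup>2 * u powr (m - 1) * (- ln (m\<^sup>2 * u) + 2 * Digamma 1)) (at u)"
proof -
  define c where "c = 2 * Digamma 1 + 1 / m"
  have fe: "M1 m = (\<lambda>u. (Cm m)\<^sup>2 / m * (u powr m * (- ln (m\<^sup>2 * u) + c)))"
    by (auto simp: M1_def c_def fun_eq_iff)
  have dp: "((\<lambda>u. u powr m) has_real_derivative m * u powr (m - 1)) (at u)"
    using u by (auto intro!: derivative_eq_intros)
  have dl: "((\<lambda>u. - ln (m\<^sup>2 * u) + c) has_real_derivative - (1 / u)) (at u)"
    using u m by (auto intro!: derivative_eq_intros simp: field_simps power2_eq_square)
  have "(M1 m has_real_derivative (Cm m)\<^sup>2 / m * (m * u powr (m - 1) * (- ln (m\<^sup>2 * u) + c) + - (1 / u) * u powr m)) (at u)"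
    unfolding fe by (intro DERIV_cmult DERIV_mult dp dl)
  moreover have "(Cm m)\<^sup>2 / m * (m * u powr (m - 1) * (- ln (m\<^sup>2 * u) + c) + - (1 / u) * u powr m) =
      (Cm m)\<^sup>2 * u powr (m - 1) * (- ln (m\<^sup>2 * u) + 2 * Digamma 1)"
  proof -
    have "u powr m = u * u powr (m - 1)" using u by (simp add: powr_diff field_simps)
    then show ?thesis using m u by (simp add: field_simps c_def)
  qed
  ultimately show ?thesis by simp
qed

lemma M1_lim0: assumes m: "m > 0" shows "(M1 m \<longlongrightarrow> 0) (at_right 0)"
proof -
  have c: "m\<^sup>2 > 0" using m by simp
  have "((\<lambda>u::real. u powr m * ln (m\<^sup>2 * u)) \<longlongrightarrow> 0) (at_right 0)" using m c by real_asymp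
  moreover have "((\<lambda>u::real. u powr m) \<longlongrightarrow> 0) (at_right 0)" using m by real_asymp
  ultimately have "((\<lambda>u. (Cm m)\<^sup>2 / m * (- (u powr m * ln (m\<^sup>2 * u)) + (2 * Digamma 1 + 1 / m) * u powr m)) \<longlongrightarrow>
      (Cm m)\<^sup>2 / m * (- 0 + (2 * Digamma 1 + 1 / m) * 0)) (at_right 0)"
    by (intro tendsto_intros)
  then show ?thesis unfolding M1_def[abs_def] by (simp add: algebra_simps)
qed

lemma filterlim_scale_right: "c > 0 \<Longrightarrow> filterlim (\<lambda>u::real. c * u) (at_right 0) (at_right 0)"
proof -
  assume c: "c > 0"
  have "((\<lambda>u::real. c * u) \<longlongrightarrow> c * 0) (at_right 0)" by (intro tendsto_intros)
  moreover have "\<forall>\<^sub>F u in at_right 0. c * u \<in> {0<..} \<and> c * u \<noteq> 0"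
    by (rule eventually_at_rightI[of 0 1]) (use c in auto)
  ultimately show ?thesis unfolding filterlim_at by simp
qed

lemma HH_ln_lim_m: "m > 0 \<Longrightarrow> ((\<lambda>u. HH (m\<^sup>2 * u) + ln (m\<^sup>2 * u)) \<longlongrightarrow> 2 * Digamma 1) (at_right 0)"
  using filterlim_compose[OF HH_ln_lim filterlim_scale_right[of "m\<^sup>2"]] by simp

lemma zHH1_lim_m: "m > 0 \<Longrightarrow> ((\<lambda>u. (m\<^sup>2 * u) * HH1 (m\<^sup>2 * u)) \<longlongrightarrow> -1) (at_right 0)"
  using filterlim_compose[OF zHH1_lim filterlim_scale_right[of "m\<^sup>2"]] by simp

lemma Phi_asym:
  assumes m: "m > 0"
  shows "((\<lambda>u. (Phi m u - M1 m u) / u powr m) \<longlongrightarrow> 0) (at_right 0)"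
proof (rule little_o_int[OF m zero_less_one])
  show "((\<lambda>u. Phi m u - M1 m u) has_real_derivative
        Phi1 m u - (Cm m)\<^sup>2 * u powr (m - 1) * (- ln (m\<^sup>2 * u) + 2 * Digamma 1)) (at u)"
    if "0 < u" "u < 1" for u
    using that by (intro DERIV_diff Phi_deriv M1_deriv m) auto
  show "((\<lambda>u. Phi m u - M1 m u) \<longlongrightarrow> 0) (at_right 0)"
    using tendsto_diff[OF Phi_lim0[OF m] M1_lim0[OF m]] by simp
  have "((\<lambda>u. (Cm m)\<^sup>2 * ((HH (m\<^sup>2 * u) + ln (m\<^sup>2 * u)) - 2 * Digamma 1)) \<longlongrightarrow> (Cm m)\<^sup>2 * (2 * Digamma 1 - 2 * Digamma 1)) (at_right 0)"
    by (intro tendsto_intros HH_ln_lim_m m)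
  moreover have "\<forall>\<^sub>F u in at_right 0. (Cm m)\<^sup>2 * ((HH (m\<^sup>2 * u) + ln (m\<^sup>2 * u)) - 2 * Digamma 1) =
      (Phi1 m u - (Cm m)\<^sup>2 * u powr (m - 1) * (- ln (m\<^sup>2 * u) + 2 * Digamma 1)) / u powr (m - 1)"
  proof (rule eventually_at_rightI[of 0 1])
    fix u :: real assume "u \<in> {0<..<1}"
    then have "u powr (m - 1) > 0" by simp
    then show "(Cm m)\<^sup>2 * ((HH (m\<^sup>2 * u) + ln (m\<^sup>2 * u)) - 2 * Digamma 1) =
      (Phi1 m u - (Cm m)\<^sup>2 * u powr (m - 1) * (- ln (m\<^sup>2 * u) + 2 * Digamma 1)) / u powr (m - 1)"
      unfolding Phi1_def by (simp add: field_simps)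
  qed simp
  ultimately show "((\<lambda>u. (Phi1 m u - (Cm m)\<^sup>2 * u powr (m - 1) * (- ln (m\<^sup>2 * u) + 2 * Digamma 1)) / u powr (m - 1)) \<longlongrightarrow> 0) (at_right 0)"
    by (simp add: tendsto_cong)
qed

lemma Phi2_asym:
  assumes m: "m > 0"
  shows "((\<lambda>u. (Phi2 m u - M2 m u) / u powr (m - 2)) \<longlongrightarrow> 0) (at_right 0)"
proof -
  have "((\<lambda>u. (Cm m)\<^sup>2 * ((m - 1) * ((HH (m\<^sup>2 * u) + ln (m\<^sup>2 * u)) - 2 * Digamma 1) + ((m\<^sup>2 * u) * HH1 (m\<^sup>2 * u) + 1)))
      \<longlongrightarrow> (Cm m)\<^sup>2 * ((m - 1) * (2 * Digamma 1 - 2 * Digamma 1) + (-1 + 1))) (at_right 0)"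
    by (intro tendsto_intros HH_ln_lim_m zHH1_lim_m m)
  moreover have "\<forall>\<^sub>F u in at_right 0. (Cm m)\<^sup>2 * ((m - 1) * ((HH (m\<^sup>2 * u) + ln (m\<^sup>2 * u)) - 2 * Digamma 1) + ((m\<^sup>2 * u) * HH1 (m\<^sup>2 * u) + 1)) =
      (Phi2 m u - M2 m u) / u powr (m - 2)"
  proof (rule eventually_at_rightI[of 0 1])
    fix u :: real assume "u \<in> {0<..<1}"
    then have u: "u > 0" by simp
    then have p: "u powr (m - 2) > 0" by simp
    have "u powr (m - 1) = u powr (1 + (m - 2))" by simp
    also have "\<dots> = u powr 1 * u powr (m - 2)" by (rule powr_add)
    finally have q: "u powr (m - 1) = u * u powr (m - 2)" using u by simp
    show "(Cm m)\<^sup>2 * ((m - 1) * ((HH (m\<^sup>2 * u) + ln (m\<^sup>2 * u)) - 2 * Digamma 1) + ((m\<^sup>2 * u) * HH1 (m\<^sup>2 * u) + 1)) =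
      (Phi2 m u - M2 m u) / u powr (m - 2)"
      unfolding Phi2_def M2_def q using p by (simp add: field_simps power2_eq_square)
  qed simp
  ultimately show ?thesis by (simp add: tendsto_cong)
qed

lemma genK_cdf_Phi:
  assumes m: "m > 0" and g: "g > 0"
  shows "genK_cdf m m g y = Phi m (y / g)"
proof -
  have "(\<lambda>s. LINT t|lborel. indicator {..y} (g * s * t) * gamma_dens m s * gamma_dens m t) =
        (\<lambda>s. gamma_dens m s * Gc m (y / g / s))"
  proof
    fix s :: real
    show "(LINT t|lborel. indicator {..y} (g * s * t) * gamma_dens m s * gamma_dens m t) = gamma_dens m s * Gc m (y / g / s)"
    proof (cases "s > 0")
      case True
      have "(\<lambda>t. indicator {..y} (g * s * t) * gamma_dens m s * gamma_dens m t) =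
            (\<lambda>t. gamma_dens m s * (indicator {..y / g / s} t * gamma_dens m t))"
      proof
        fix t
        have "g * s * t \<le> y \<longleftrightarrow> t \<le> y / g / s" using g True
          by (simp add: field_simps mult.commute mult.left_commute)
        then show "indicator {..y} (g * s * t) * gamma_dens m s * gamma_dens m t =
            gamma_dens m s * (indicator {..y / g / s} t * gamma_dens m t)"
          by (simp add: indicator_def)
      qed
      then show ?thesis by (simp add: Gc_def)
    qed (simp add: gamma_dens_def)
  qed
  then show ?thesis unfolding genK_cdf_def Phi_def by simp
qed

lemma Gamma_plus2: "(k::real) > 0 \<Longrightarrow> Gamma (k + 2) = (k + 1) * k * Gamma k"
proof -
  assume k: "k > 0"
  have a: "k \<notin> \<int>\<^sub>\<le>\<^sub>0" "k + 1 \<notin> \<int>\<^sub>\<le>\<^sub>0" using k by auto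
  have "Gamma (k + 2) = Gamma ((k + 1) + 1)" by (simp add: add.assoc)
  also have "\<dots> = (k + 1) * Gamma (k + 1)" by (rule Gamma_plus1[OF a(2)])
  also have "Gamma (k + 1) = k * Gamma k" by (rule Gamma_plus1[OF a(1)])
  finally show ?thesis by simp
qed

lemma gd_m1: "k > 0 \<Longrightarrow> (LINT t|lborel. t * gamma_dens k t) = 1"
  and gd_m2: "k > 0 \<Longrightarrow> (LINT t|lborel. t\<^sup>2 * gamma_dens k t) = (k + 1) / k"
proof -
  assume k: "k > 0"
  have a: "k \<notin> \<int>\<^sub>\<le>\<^sub>0" using k by auto
  have g: "Gamma k \<noteq> 0" using Gamma_real_pos[OF k] by simp
  show "(LINT t|lborel. t * gamma_dens k t) = 1"
    using gd_moment(2)[OF k, of 1] Gamma_plus1[OF a] k g by (simp add: add.commute)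
  show "(LINT t|lborel. t\<^sup>2 * gamma_dens k t) = (k + 1) / k"
    using gd_moment(2)[OF k, of 2] Gamma_plus2[OF k] k g by (simp add: power2_eq_square)
qed

lemma genK_var_eq:
  assumes k: "k > 0" and m: "m > 0"
  shows "genK_var k m g = g\<^sup>2 * ((k + 1) * (m + 1) / (k * m) - 1)"
proof -
  have i0: "integrable lborel (gamma_dens m)" "integrable lborel (\<lambda>t. t * gamma_dens m t)"
    "integrable lborel (\<lambda>t. t\<^sup>2 * gamma_dens m t)"
    using gd_moment(1)[OF m, of 0] gd_moment(1)[OF m, of 1] gd_moment(1)[OF m, of 2] by auto
  have k0: "integrable lborel (gamma_dens k)" "integrable lborel (\<lambda>t. t * gamma_dens k t)"
    "integrable lborel (\<lambda>t. t\<^sup>2 * gamma_dens k t)"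
    using gd_moment(1)[OF k, of 0] gd_moment(1)[OF k, of 1] gd_moment(1)[OF k, of 2] by auto
  have inner: "(LINT t|lborel. (g * s * t - g)\<^sup>2 * gamma_dens k s * gamma_dens m t) =
      g\<^sup>2 * ((m + 1) / m * (s\<^sup>2 * gamma_dens k s) - 2 * (s * gamma_dens k s) + gamma_dens k s)" for s
  proof -
    have "(\<lambda>t. (g * s * t - g)\<^sup>2 * gamma_dens k s * gamma_dens m t) =
          (\<lambda>t. (g\<^sup>2 * gamma_dens k s) * (s\<^sup>2 * (t\<^sup>2 * gamma_dens m t) - 2 * s * (t * gamma_dens m t) + gamma_dens m t))"
      by (auto simp: fun_eq_iff power2_eq_square algebra_simps)
    then have "(LINT t|lborel. (g * s * t - g)\<^sup>2 * gamma_dens k s * gamma_dens m t) =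
       (g\<^sup>2 * gamma_dens k s) * (s\<^sup>2 * (LINT t|lborel. t\<^sup>2 * gamma_dens m t) - 2 * s * (LINT t|lborel. t * gamma_dens m t) + (LINT t|lborel. gamma_dens m t))"
      using i0 by (simp add: integral_add integral_diff)
    also have "\<dots> = g\<^sup>2 * ((m + 1) / m * (s\<^sup>2 * gamma_dens k s) - 2 * (s * gamma_dens k s) + gamma_dens k s)"
      using gd_m1[OF m] gd_m2[OF m] gd_integral[OF m] by (simp add: algebra_simps)
    finally show ?thesis .
  qed
  have "genK_var k m g = (LINT s|lborel. g\<^sup>2 * ((m + 1) / m * (s\<^sup>2 * gamma_dens k s) - 2 * (s * gamma_dens k s) + gamma_dens k s))"
    unfolding genK_var_def inner ..
  also have "\<dots> = g\<^sup>2 * ((m + 1) / m * (LINT s|lborel. s\<^sup>2 * gamma_dens k s) - 2 * (LINT s|lborel. s * gamma_dens k s) + (LINT s|lborel. gamma_dens k s))"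
    using k0 by (simp add: integral_add integral_diff)
  also have "\<dots> = g\<^sup>2 * ((k + 1) * (m + 1) / (k * m) - 1)"
    apply (simp only: gd_m1[OF k] gd_m2[OF k] gd_integral[OF k])
    using k m by (simp add: field_simps)
  finally show ?thesis .
qed

lemma P_derivs:
  fixes lam g ge m :: real
  assumes m: "m > 0" and g: "g > 0" and lam: "lam > 1" and ge: "ge > 0"
  defines "P \<equiv> (\<lambda>x. genK_cdf m m g (lam - 1 + lam * x))"
  shows "P ge = Phi m ((lam - 1 + lam * ge) / g)"
    and "deriv (deriv P) ge = Phi2 m ((lam - 1 + lam * ge) / g) * (lam / g) * (lam / g)"
proof -
  define S where "S = {(1 - lam) / lam <..}"
  have S: "x \<in> S \<longleftrightarrow> (lam - 1 + lam * x) / g > 0" for x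
    using lam g by (auto simp: S_def field_simps)
  have oS: "open S" by (simp add: S_def)
  have "ge * lam > 0" using ge lam by simp
  then have geS: "ge \<in> S" using S[of ge] lam g by (simp add: field_simps)
  have Pe: "P x = Phi m ((lam - 1 + lam * x) / g)" for x
    unfolding P_def using genK_cdf_Phi[OF m g] by simp
  show "P ge = Phi m ((lam - 1 + lam * ge) / g)" by (rule Pe)
  have dP: "(P has_real_derivative Phi1 m ((lam - 1 + lam * x) / g) * (lam / g)) (at x)" if "x \<in> S" for x
  proof -
    have "((\<lambda>x. Phi m ((lam - 1 + lam * x) / g)) has_real_derivative Phi1 m ((lam - 1 + lam * x) / g) * (lam / g)) (at x)"
      by (rule DERIV_chain2[where g="\<lambda>x. (lam - 1 + lam * x) / g" and x=x, OF Phi_deriv[OF m]])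
         (use S[of x] that g in \<open>auto intro!: derivative_eq_intros\<close>)
    moreover have "P = (\<lambda>x. Phi m ((lam - 1 + lam * x) / g))" using Pe by (simp add: fun_eq_iff)
    ultimately show ?thesis by simp
  qed
  have dd: "deriv P x = Phi1 m ((lam - 1 + lam * x) / g) * (lam / g)" if "x \<in> S" for x
    by (rule DERIV_imp_deriv[OF dP[OF that]])
  have "((\<lambda>x. Phi1 m ((lam - 1 + lam * x) / g) * (lam / g)) has_real_derivative
        Phi2 m ((lam - 1 + lam * ge) / g) * (lam / g) * (lam / g)) (at ge)"
    by (intro DERIV_cmult_right DERIV_chain2[where g="\<lambda>x. (lam - 1 + lam * x) / g" and x=ge, OF Phi1_deriv[OF m]])
       (use S[of ge] geS g in \<open>auto intro!: derivative_eq_intros\<close>)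
  then have "(deriv P has_real_derivative Phi2 m ((lam - 1 + lam * ge) / g) * (lam / g) * (lam / g)) (at ge)"
    by (rule has_field_derivative_transform_within_open[OF _ oS geS]) (simp add: dd)
  then show "deriv (deriv P) ge = Phi2 m ((lam - 1 + lam * ge) / g) * (lam / g) * (lam / g)"
    by (rule DERIV_imp_deriv)
qed

lemma alg:
  fixes m A G P Ga a g lam ge ce D D1 L :: real
  assumes nz: "m \<noteq> 0" "m - 1 \<noteq> 0" "A \<noteq> 0" "G \<noteq> 0" "P \<noteq> 0" "Ga \<noteq> 0" "a \<noteq> 0" "g \<noteq> 0" "lam \<noteq> 0" "ge \<noteq> 0"
  shows "1 / G * ((D + 1 / m + 2 * D1 - D - L) / (m / P\<^sup>2 * Ga\<^sup>2 * (1 / A))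
          + ce * (D - 1 / (m - 1) + 2 * D1 - D - L) / (2 * (1 / P\<^sup>2) * (1 / lam\<^sup>2) * (1 / ge\<^sup>2) * Ga * (Ga / (m - 1)) * (a\<^sup>2 / A)))
     = P\<^sup>2 / Ga\<^sup>2 * (A / G) / m * (- L + 2 * D1 + 1 / m)
       + ge\<^sup>2 * ce / 2 * (lam / g)\<^sup>2 * (P\<^sup>2 / Ga\<^sup>2 * ((A / G) / (a / g)\<^sup>2) * ((m - 1) * (- L + 2 * D1) - 1))"
proof -
  have l: "1 / G * ((D + 1 / m + 2 * D1 - D - L) / (m / P\<^sup>2 * Ga\<^sup>2 * (1 / A))) = P\<^sup>2 / Ga\<^sup>2 * (A / G) / m * (- L + 2 * D1 + 1 / m)"
    using nz by (simp add: field_simps)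
  have e: "D - 1 / (m - 1) + 2 * D1 - D - L = (-1 + (m - 1) * (2 * D1 - L)) / (m - 1)"
    using nz by (simp add: field_simps)
  have "1 / G * (ce * (D - 1 / (m - 1) + 2 * D1 - D - L) / (2 * (1 / P\<^sup>2) * (1 / lam\<^sup>2) * (1 / ge\<^sup>2) * Ga * (Ga / (m - 1)) * (a\<^sup>2 / A)))
     = ce * P\<^sup>2 * lam\<^sup>2 * ge\<^sup>2 * A * (-1 + (m - 1) * (2 * D1 - L)) / (2 * G * Ga\<^sup>2 * a\<^sup>2)"
    unfolding e using nz by (simp add: power2_eq_square divide_simps; simp add: algebra_simps)
  also have "\<dots> = ge\<^sup>2 * ce / 2 * (lam / g)\<^sup>2 * (P\<^sup>2 / Ga\<^sup>2 * ((A / G) / (a / g)\<^sup>2) * ((m - 1) * (- L + 2 * D1) - 1))"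
    using nz by (simp add: power2_eq_square divide_simps; simp add: algebra_simps)
  finally have r: "1 / G * (ce * (D - 1 / (m - 1) + 2 * D1 - D - L) / (2 * (1 / P\<^sup>2) * (1 / lam\<^sup>2) * (1 / ge\<^sup>2) * Ga * (Ga / (m - 1)) * (a\<^sup>2 / A)))
     = ge\<^sup>2 * ce / 2 * (lam / g)\<^sup>2 * (P\<^sup>2 / Ga\<^sup>2 * ((A / G) / (a / g)\<^sup>2) * ((m - 1) * (- L + 2 * D1) - 1))" .
  show ?thesis using l r by (simp only: distrib_left)
qed

lemma main_eq:
  fixes m a g lam ge ce :: real
  assumes m: "m > 0" "m \<noteq> 1" and a: "a > 0" and g: "g > 0" and lam: "lam > 0" and ge: "ge > 0"
  shows "g powr (- m) *
              ((Digamma (m + 1) + 2 * Digamma 1 - Digamma m - ln (m\<^sup>2 * a / g))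
                 / (m powr (- 2 * m + 1) * (Gamma m)\<^sup>2 * a powr (- m))
               + ce * (Digamma (m - 1) + 2 * Digamma 1 - Digamma m - ln (m\<^sup>2 * a / g))
                 / (2 * m powr (- 2 * m) * lam powr (-2) * ge powr (-2)
                    * Gamma m * Gamma (m - 1) * a powr (2 - m)))
       = M1 m (a / g) + ge\<^sup>2 * ce / 2 * (lam / g)\<^sup>2 * M2 m (a / g)"
proof -
  have m0: "m \<noteq> 0" using m by simp
  have m1: "m - 1 \<noteq> 0" using m by simp
  have Dp: "Digamma (m + 1) = Digamma m + 1 / m" by (rule Digamma_plus1[OF m0])
  have Dm: "Digamma (m - 1) = Digamma m - 1 / (m - 1)"
    using Digamma_plus1[OF m1] by simp
  have nz: "m - 1 \<notin> \<int>\<^sub>\<le>\<^sub>0"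
  proof
    assume "m - 1 \<in> \<int>\<^sub>\<le>\<^sub>0"
    then obtain n :: nat where n: "m - 1 = - real n" by (elim nonpos_Ints_cases')
    then show False using m by (cases n) auto
  qed
  have Gm: "Gamma m = (m - 1) * Gamma (m - 1)" using Gamma_plus1[OF nz] by simp
  have G0: "Gamma m > 0" using Gamma_real_pos[OF m(1)] .
  have G1e: "Gamma (m - 1) = Gamma m / (m - 1)" using Gm m1 by simp
  define A where "A = a powr m"
  define G where "G = g powr m"
  define P where "P = m powr m"
  have A: "A > 0" using a by (simp add: A_def)
  have G: "G > 0" using g by (simp add: G_def)
  have P: "P > 0" using m by (simp add: P_def)
  have e1: "g powr (- m) = 1 / G" by (simp add: G_def powr_minus divide_inverse)
  have e2: "a powr (- m) = 1 / A" by (simp add: A_def powr_minus divide_inverse)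
  have "m powr (2 * m) = m powr (m + m)" by (rule arg_cong[where f="\<lambda>x. m powr x"]) simp
  also have "\<dots> = P * P" unfolding P_def by (rule powr_add)
  finally have mm: "m powr (2 * m) = P\<^sup>2" by (simp add: power2_eq_square)
  have e3: "m powr (- 2 * m + 1) = m / P\<^sup>2"
  proof -
    have "m powr (- 2 * m + 1) = m powr (- (2 * m) + 1)" by simp
    also have "\<dots> = m powr (- (2 * m)) * m powr 1" by (rule powr_add)
    finally have "m powr (- 2 * m + 1) = m powr (- (2 * m)) * m" using m by simp
    then show ?thesis using m by (simp add: powr_minus mm divide_inverse)
  qed
  have e4: "m powr (- 2 * m) = 1 / P\<^sup>2"
    using mm by (simp add: powr_minus divide_inverse)
  have e5: "lam powr (-2) = 1 / lam\<^sup>2" using lam by (simp add: powr_minus divide_inverse)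
  have e6: "ge powr (-2) = 1 / ge\<^sup>2" using ge by (simp add: powr_minus divide_inverse)
  have e7: "a powr (2 - m) = a\<^sup>2 / A" using a by (simp add: powr_diff A_def)
  have e8: "(a / g) powr m = A / G" by (simp add: powr_divide A_def G_def)
  have e9: "(a / g) powr (m - 2) = (A / G) / (a / g)\<^sup>2"
    using a g by (simp add: powr_diff powr_divide A_def G_def power_divide)
  have e10: "(Cm m)\<^sup>2 = P\<^sup>2 / (Gamma m)\<^sup>2" by (simp add: Cm_def P_def power_divide)
  have e11: "ln (m\<^sup>2 * a / g) = ln (m\<^sup>2 * (a / g))" by simp
  have L: "g powr (- m) *
              ((Digamma (m + 1) + 2 * Digamma 1 - Digamma m - ln (m\<^sup>2 * a / g))
                 / (m powr (- 2 * m + 1) * (Gamma m)\<^sup>2 * a powr (- m))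
               + ce * (Digamma (m - 1) + 2 * Digamma 1 - Digamma m - ln (m\<^sup>2 * a / g))
                 / (2 * m powr (- 2 * m) * lam powr (-2) * ge powr (-2)
                    * Gamma m * Gamma (m - 1) * a powr (2 - m)))
     = 1 / G * ((Digamma m + 1 / m + 2 * Digamma 1 - Digamma m - ln (m\<^sup>2 * (a / g))) / (m / P\<^sup>2 * (Gamma m)\<^sup>2 * (1 / A))
          + ce * (Digamma m - 1 / (m - 1) + 2 * Digamma 1 - Digamma m - ln (m\<^sup>2 * (a / g))) / (2 * (1 / P\<^sup>2) * (1 / lam\<^sup>2) * (1 / ge\<^sup>2) * Gamma m * (Gamma m / (m - 1)) * (a\<^sup>2 / A)))"
    by (simp only: e1 e2 e3 e4 e5 e6 e7 e11 Dp Dm G1e)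
  have R: "M1 m (a / g) + ge\<^sup>2 * ce / 2 * (lam / g)\<^sup>2 * M2 m (a / g) =
      P\<^sup>2 / (Gamma m)\<^sup>2 * (A / G) / m * (- ln (m\<^sup>2 * (a / g)) + 2 * Digamma 1 + 1 / m)
       + ge\<^sup>2 * ce / 2 * (lam / g)\<^sup>2 * (P\<^sup>2 / (Gamma m)\<^sup>2 * ((A / G) / (a / g)\<^sup>2) * ((m - 1) * (- ln (m\<^sup>2 * (a / g)) + 2 * Digamma 1) - 1))"
    by (simp only: M1_def M2_def e8 e9 e10)
  show ?thesis unfolding L R
    by (rule alg) (use m0 m1 A G P a g lam ge G0 in auto)
qed

lemma filterlim_inv_at_top: "a > 0 \<Longrightarrow> filterlim (\<lambda>g::real. a / g) (at_right 0) at_top"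
proof -
  assume a: "a > 0"
  have "((\<lambda>g::real. a / g) \<longlongrightarrow> 0) at_top"
    by (rule tendsto_divide_0[OF tendsto_const]) (rule filterlim_at_top_imp_at_infinity[OF filterlim_ident])
  moreover have "\<forall>\<^sub>F g in at_top. a / g \<in> {0<..} \<and> a / g \<noteq> 0"
    using eventually_gt_at_top[of 0] by eventually_elim (use a in auto)
  ultimately show ?thesis unfolding filterlim_at by simp
qed

theorem lemma2:
  fixes Rs kd md ke me ge :: real
  assumes "Rs > 0" and "kd > 0" and "md > 0" and "ke > 0" and "me > 0" and "ge > 0"
    and "kd = md" and "md \<noteq> 1"
  defines "lam \<equiv> 2 powr Rs"
  defines "a \<equiv> lam - 1 + lam * ge"
  defines "ce \<equiv> (ke + 1) * (me + 1) / (ke * me) - 1"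
  shows "(\<lambda>gd. sop_approx lam kd md gd ke me ge
            - gd powr (- md) *
              ((Digamma (md + 1) + 2 * Digamma 1 - Digamma md - ln (md\<^sup>2 * a / gd))
                 / (md powr (- 2 * md + 1) * (Gamma md)\<^sup>2 * a powr (- md))
               + ce * (Digamma (md - 1) + 2 * Digamma 1 - Digamma md - ln (md\<^sup>2 * a / gd))
                 / (2 * md powr (- 2 * md) * lam powr (-2) * ge powr (-2)
                    * Gamma md * Gamma (md - 1) * a powr (2 - md))))
         \<in> o[at_top](\<lambda>gd. gd powr (- md))"
proof -
  note asm = assms(1-8)
  have lam1: "lam > 1" unfolding lam_def using asm(1) by simp
  have a0: "a > 0" unfolding a_def using lam1 asm(6) by (simp add: add_pos_pos)
  define m where "m = md"
  have m: "m > 0" "m \<noteq> 1" using asm by (auto simp: m_def)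
  have var: "genK_var ke me ge = ge\<^sup>2 * ce" unfolding ce_def by (rule genK_var_eq) (use asm in auto)
  define E1 where "E1 u = (Phi m u - M1 m u) / u powr m" for u
  define E2 where "E2 u = (Phi2 m u - M2 m u) / u powr (m - 2)" for u
  define K where "K = ge\<^sup>2 * ce / 2 * lam\<^sup>2"
  define A where "A = a powr m"
  let ?f = "\<lambda>gd. sop_approx lam kd md gd ke me ge
            - gd powr (- md) *
              ((Digamma (md + 1) + 2 * Digamma 1 - Digamma md - ln (md\<^sup>2 * a / gd))
                 / (md powr (- 2 * md + 1) * (Gamma md)\<^sup>2 * a powr (- md))
               + ce * (Digamma (md - 1) + 2 * Digamma 1 - Digamma md - ln (md\<^sup>2 * a / gd))
                 / (2 * md powr (- 2 * md) * lam powr (-2) * ge powr (-2)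
                    * Gamma md * Gamma (md - 1) * a powr (2 - md)))"
  have key: "?f g / g powr (- md) = E1 (a / g) * A + K * E2 (a / g) * A / a\<^sup>2" if g: "g > 0" for g
  proof -
    have sop: "sop_approx lam kd md g ke me ge = Phi m (a / g) + ge\<^sup>2 * ce / 2 * (Phi2 m (a / g) * (lam / g) * (lam / g))"
      using P_derivs[OF m(1) g lam1 asm(6)] var asm(7)
      unfolding sop_approx_def Let_def a_def m_def by simp
    have T: "g powr (- md) *
              ((Digamma (md + 1) + 2 * Digamma 1 - Digamma md - ln (md\<^sup>2 * a / g))
                 / (md powr (- 2 * md + 1) * (Gamma md)\<^sup>2 * a powr (- md))
               + ce * (Digamma (md - 1) + 2 * Digamma 1 - Digamma md - ln (md\<^sup>2 * a / g))
                 / (2 * md powr (- 2 * md) * lam powr (-2) * ge powr (-2)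
                    * Gamma md * Gamma (md - 1) * a powr (2 - md)))
          = M1 m (a / g) + ge\<^sup>2 * ce / 2 * (lam / g)\<^sup>2 * M2 m (a / g)"
      unfolding m_def by (rule main_eq) (use asm a0 g lam1 in auto)
    have u: "a / g > 0" using a0 g by simp
    have p1: "(a / g) powr m = A / g powr m" by (simp add: A_def powr_divide)
    have p2: "(a / g) powr (m - 2) = (A / g powr m) / (a / g)\<^sup>2"
      using a0 g by (simp add: powr_diff powr_divide A_def power_divide)
    have pg: "g powr (- md) = 1 / g powr m" by (simp add: m_def powr_minus divide_inverse)
    have gm: "g powr m > 0" using g by simp
    have d1: "Phi m (a / g) - M1 m (a / g) = E1 (a / g) * (A / g powr m)"
      using u a0 g unfolding E1_def p1[symmetric] by simp
    have d2: "Phi2 m (a / g) - M2 m (a / g) = E2 (a / g) * ((A / g powr m) / (a / g)\<^sup>2)"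
      using u a0 g unfolding E2_def p2[symmetric] by simp
    have "?f g = (Phi m (a / g) - M1 m (a / g)) + ge\<^sup>2 * ce / 2 * (lam / g)\<^sup>2 * (Phi2 m (a / g) - M2 m (a / g))"
      unfolding sop T using g by (simp add: field_simps power2_eq_square)
    also have "\<dots> = E1 (a / g) * (A / g powr m) + ge\<^sup>2 * ce / 2 * (lam / g)\<^sup>2 * (E2 (a / g) * ((A / g powr m) / (a / g)\<^sup>2))"
      unfolding d1 d2 ..
    finally have "?f g = \<dots>" .
    then show ?thesis unfolding pg K_def using gm g a0
      by (simp add: field_simps power2_eq_square)
  qed
  have fl: "filterlim (\<lambda>g::real. a / g) (at_right 0) at_top" by (rule filterlim_inv_at_top[OF a0])
  have l1: "((\<lambda>g. E1 (a / g)) \<longlongrightarrow> 0) at_top"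
    using filterlim_compose[OF Phi_asym[OF m(1)] fl] unfolding E1_def by simp
  have l2: "((\<lambda>g. E2 (a / g)) \<longlongrightarrow> 0) at_top"
    using filterlim_compose[OF Phi2_asym[OF m(1)] fl] unfolding E2_def by simp
  have "((\<lambda>g. E1 (a / g) * A + K * E2 (a / g) * A / a\<^sup>2) \<longlongrightarrow> 0 * A + K * 0 * A / a\<^sup>2) at_top"
    using a0 by (intro tendsto_intros l1 l2) auto
  then have "((\<lambda>g. E1 (a / g) * A + K * E2 (a / g) * A / a\<^sup>2) \<longlongrightarrow> 0) at_top" by simp
  moreover have "\<forall>\<^sub>F g in at_top. E1 (a / g) * A + K * E2 (a / g) * A / a\<^sup>2 = ?f g / g powr (- md)"
    using eventually_gt_at_top[of 0] by eventually_elim (rule key[symmetric])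
  ultimately have lim: "((\<lambda>g. ?f g / g powr (- md)) \<longlongrightarrow> 0) at_top" by (simp add: tendsto_cong)
  show ?thesis
  proof (rule smalloI_tendsto[OF lim])
    show "\<forall>\<^sub>F g in at_top. g powr (- md) \<noteq> 0"
      using eventually_gt_at_top[of 0] by eventually_elim simp
  qed
qed

end
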